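(* Let $\varphi:V\to V$ be an $R$-linear map, where $R=\mathbb{R}[t^{\pm1}]$ and $V$ is a free $R$-module of rank $n-1$. Suppose that the $\mathbb{E}$-linear map $\varphi\otimes_R\mathrm{Id}:V\otimes_R\mathbb{E}\to V\otimes_R\mathbb{E}$ has all of its eigenvalues $(\lambda_1,\dots,\lambda_{n-1})$ in $\mathbb{E}$. Then for every $m\geq1$, every eigenvalue of the $\mathbb{F}_m$-linear map $\varphi^{\otimes_{\mathbb{R}}m}\otimes_{R_m}\mathrm{Id}:V_m\otimes_{R_m}\mathbb{F}_m\to V_m\otimes_{R_m}\mathbb{F}_m$ is of the form $\lambda_{i_1}\otimes\cdots\otimes\lambda_{i_m}$ with $1\leq i_1,\dots,i_m\leq n-1$.
   Context: $\mathbb{E}=\bigcup_{k\ge1}\mathbb{R}((t^{1/k}))$ is the field of Puiseux series over $\mathbb{R}$, containing $R$. $R_m=R^{\otimes_{\mathbb{R}}m}$, $\mathbb{E}_m=\mathbb{E}^{\otimes_{\mathbb{R}}m}\supset R_m$, which is an integral domain with field of fractions $\mathbb{F}_m$; $V_m=V^{\otimes_{\mathbb{R}}m}$ is an $R_m$-module via $(r_1\otimes\cdots\otimes r_m)(u_1\otimes\cdots\otimes u_m)=r_1u_1\otimes\cdots\otimes r_mu_m$, and $\varphi^{\otimes_{\mathbb{R}}m}(u_1\otimes\cdots\otimes u_m)=\varphi(u_1)\otimes\cdots\otimes\varphi(u_m)$. Elements $\lambda_{i_1}\otimes\cdots\otimes\lambda_{i_m}\in\mathbb{E}_m$ are regarded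 in $\mathbb{F}_m$. *)

theory Defs
  imports Complex_Main
begin

text \<open>Puiseux series over the reals, represented by their coefficient functions
  rat => real: a series sum_q c(q) t^q lies in E iff its support is contained in
  (1/k)Z for some k > 0 and is bounded below.\<close>

type_synonym ser = "rat \<Rightarrow> real"

definition puiseux :: "ser set" where
  "puiseux = {f. \<exists>k::nat. k > 0 \<and> (\<exists>N::int. \<forall>q. f q \<noteq> 0 \<longrightarrow>
       (\<exists>z::int. q = of_int z / of_nat k) \<and> of_int N \<le> q)}"

definition laurent_poly :: "ser set" where
  "laurent_poly = {f. finite {q. f q \<noteq> 0} \<and> (\<forall>q. f q \<noteq> 0 \<longrightarrow> q \<in> \<int>)}"

definition ser_zero :: ser where "ser_zero = (\<lambda>q. 0)"
definition ser_one :: ser where "ser_one = (\<lambda>q. if q = 0 then 1 else 0)"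
definition ser_diff :: "ser \<Rightarrow> ser \<Rightarrow> ser" where "ser_diff f g = (\<lambda>q. f q - g q)"

text \<open>Multiplication (Cauchy product; the sum is finite for Puiseux series).\<close>
definition ser_mult :: "ser \<Rightarrow> ser \<Rightarrow> ser" where
  "ser_mult f g = (\<lambda>q. \<Sum>(u, v)\<in>{(u, v). u + v = q \<and> f u \<noteq> 0 \<and> g v \<noteq> 0}. f u * g v)"

definition minor :: "(nat \<Rightarrow> nat \<Rightarrow> 'a) \<Rightarrow> nat \<Rightarrow> nat \<Rightarrow> (nat \<Rightarrow> nat \<Rightarrow> 'a)" where
  "minor M i j = (\<lambda>a b. M (if a < i then a else Suc a) (if b < j then b else Suc b))"

fun ser_det :: "nat \<Rightarrow> (nat \<Rightarrow> nat \<Rightarrow> ser) \<Rightarrow> ser" where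
  "ser_det 0 M = ser_one"
| "ser_det (Suc k) M =
     (\<lambda>q. \<Sum>j<Suc k. (-1) ^ j * ser_mult (M 0 j) (ser_det k (minor M 0 j)) q)"

definition char_poly_at :: "nat \<Rightarrow> (nat \<Rightarrow> nat \<Rightarrow> ser) \<Rightarrow> ser \<Rightarrow> ser" where
  "char_poly_at N A x = ser_det N (\<lambda>i j. ser_diff (if i = j then x else ser_zero) (A i j))"

text \<open>The tensor power E_m = E (x)_R ... (x)_R E, realised as series in m variables
  t_0..t_(m-1) with rational exponents; coefficient functions on exponent vectors
  (nat => rat) that vanish outside the first m coordinates.
  f_0 (x) ... (x) f_(m-1) corresponds to the coefficientwise product.\<close>

type_synonym mser = "(nat \<Rightarrow> rat) \<Rightarrow> real"

definition tens :: "nat \<Rightarrow> (nat \<Rightarrow> ser) \<Rightarrow> mser" where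
  "tens m fs = (\<lambda>e. if (\<forall>j\<ge>m. e j = 0) then (\<Prod>j<m. fs j (e j)) else 0)"

definition Em :: "nat \<Rightarrow> mser set" where
  "Em m = {c. \<exists>L :: (nat \<Rightarrow> ser) list. (\<forall>fs\<in>set L. \<forall>j<m. fs j \<in> puiseux) \<and>
              c = (\<lambda>e. \<Sum>fs\<leftarrow>L. tens m fs e)}"

definition mser_mult :: "mser \<Rightarrow> mser \<Rightarrow> mser" where
  "mser_mult c d = (\<lambda>e. \<Sum>(u, v)\<in>{(u, v). (\<forall>i. u i + v i = e i) \<and> c u \<noteq> 0 \<and> d v \<noteq> 0}.
                          c u * d v)"

text \<open>Index set of the standard basis e_(i_1) (x) ... (x) e_(i_m) of V_m (0-based).\<close>
definition idx :: "nat \<Rightarrow> nat \<Rightarrow> nat list set" where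
  "idx m N = {is. length is = m \<and> (\<forall>i\<in>set is. i < N)}"

text \<open>Matrix of phi^(x m) in that basis (entries in R_m, a subring of E_m).\<close>
definition tensor_matrix :: "nat \<Rightarrow> (nat \<Rightarrow> nat \<Rightarrow> ser) \<Rightarrow> nat list \<Rightarrow> nat list \<Rightarrow> mser" where
  "tensor_matrix m A = (\<lambda>is js. tens m (\<lambda>j. A (is ! j) (js ! j)))"

text \<open>a/b (a, b in E_m, b nonzero) is an eigenvalue over F_m = Frac(E_m) of the
  matrix M indexed by idx m N: there is a nonzero eigenvector, which after clearing
  denominators can be taken with entries in E_m, satisfying b (M w) = a w.\<close>
definition frac_eigenvalue :: "nat \<Rightarrow> nat \<Rightarrow> (nat list \<Rightarrow> nat list \<Rightarrow> mser) \<Rightarrow> mser \<Rightarrow> mser \<Rightarrow> bool" where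
  "frac_eigenvalue m N M a b \<longleftrightarrow>
     (\<exists>w. (\<forall>js\<in>idx m N. w js \<in> Em m) \<and> (\<exists>js\<in>idx m N. w js \<noteq> (\<lambda>e. 0)) \<and>
          (\<forall>is\<in>idx m N. mser_mult b (\<lambda>e. \<Sum>js\<in>idx m N. mser_mult (M is js) (w js) e)
                          = mser_mult a (w is)))"

end

theory Submission
  imports Defs "Jordan_Normal_Form.Char_Poly" "HOL-Library.Function_Algebras"
begin


type_synonym ex = "nat \<Rightarrow> rat"

definition fsum :: "('a \<Rightarrow> real) \<Rightarrow> real" where
  "fsum g = (\<Sum>x\<in>{x. g x \<noteq> 0}. g x)"

lemma fsum_eq_sum: assumes "finite S" "{x. g x \<noteq> 0} \<subseteq> S" shows "fsum g = sum g S"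
  unfolding fsum_def by (rule sum.mono_neutral_left[OF assms(1) assms(2)]) auto

lemma fsum_inj: assumes "inj h" "{x. g x \<noteq> 0} \<subseteq> range h"
  shows "fsum (\<lambda>x. g (h x)) = fsum g"
proof -
  have "bij_betw h {x. g (h x) \<noteq> 0} {y. g y \<noteq> 0}"
    unfolding bij_betw_def using assms by (auto intro: inj_on_subset)
  then show ?thesis unfolding fsum_def by (rule sum.reindex_bij_betw)
qed

lemma fsum_bij: assumes "bij h" shows "fsum (\<lambda>x. g (h x)) = fsum g"
  using assms by (intro fsum_inj) (auto simp: bij_def)

lemma fsum_cmult: "fsum (\<lambda>x. r * g x) = r * fsum g"
proof (cases "r = 0")
  case False
  then show ?thesis unfolding fsum_def by (simp add: sum_distrib_left)
qed (simp add: fsum_def)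

lemma fsum_multc: "fsum (\<lambda>x. g x * r) = fsum g * r"
  using fsum_cmult[of r g] by (simp add: mult.commute)

lemma fsum_neg: "fsum (\<lambda>x. - g x) = - fsum g"
  unfolding fsum_def by (simp add: sum_negf)

lemma fsum_zero[simp]: "fsum (\<lambda>x. 0) = 0"
  unfolding fsum_def by simp

lemma fsum_add: assumes "finite {x. g x \<noteq> 0}" "finite {x. h x \<noteq> 0}"
  shows "fsum (\<lambda>x. g x + h x) = fsum g + fsum h"
proof -
  let ?S = "{x. g x \<noteq> 0} \<union> {x. h x \<noteq> 0}"
  have f: "finite ?S" using assms by simp
  have "fsum (\<lambda>x. g x + h x) = sum (\<lambda>x. g x + h x) ?S" by (rule fsum_eq_sum[OF f]) auto
  moreover have "fsum g = sum g ?S" by (rule fsum_eq_sum[OF f]) auto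
  moreover have "fsum h = sum h ?S" by (rule fsum_eq_sum[OF f]) auto
  ultimately show ?thesis by (simp add: sum.distrib)
qed

lemma fsum_single: assumes "{x. g x \<noteq> 0} \<subseteq> {a}" shows "fsum g = g a"
  using fsum_eq_sum[of "{a}" g] assms by simp

lemma fsum_nonzero: "fsum g \<noteq> 0 \<Longrightarrow> \<exists>x. g x \<noteq> 0"
  unfolding fsum_def by (metis (mono_tags, lifting) empty_Collect_eq sum.empty)

lemma fsum_swap: assumes "finite {(x, y). F x y \<noteq> 0}"
  shows "fsum (\<lambda>x. fsum (\<lambda>y. F x y)) = fsum (\<lambda>y. fsum (\<lambda>x. F x y))"
proof -
  let ?P = "{(x, y). F x y \<noteq> 0}"
  let ?S = "fst ` ?P" and ?T = "snd ` ?P"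
  have fS: "finite ?S" and fT: "finite ?T" using assms by auto
  have 1: "fsum (F x) = sum (F x) ?T" for x
    by (rule fsum_eq_sum[OF fT]) (auto simp: image_iff)
  have 2: "fsum (\<lambda>x. F x y) = sum (\<lambda>x. F x y) ?S" for y
    by (rule fsum_eq_sum[OF fS]) (auto simp: image_iff)
  have "fsum (\<lambda>x. fsum (\<lambda>y. F x y)) = fsum (\<lambda>x. sum (F x) ?T)" using 1 by simp
  also have "\<dots> = sum (\<lambda>x. sum (F x) ?T) ?S"
  proof (rule fsum_eq_sum[OF fS], safe)
    fix x assume "sum (F x) ?T \<noteq> 0"
    then obtain y where "F x y \<noteq> 0" by (meson sum.neutral)
    then show "x \<in> ?S" by (auto simp: image_iff)
  qed
  also have "\<dots> = sum (\<lambda>y. sum (\<lambda>x. F x y) ?S) ?T" by (rule sum.swap)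
  also have "\<dots> = fsum (\<lambda>y. sum (\<lambda>x. F x y) ?S)"
  proof (rule fsum_eq_sum[OF fT, symmetric], safe)
    fix y assume "sum (\<lambda>x. F x y) ?S \<noteq> 0"
    then obtain x where "F x y \<noteq> 0" by (meson sum.neutral)
    then show "y \<in> ?T" by (auto simp: image_iff)
  qed
  also have "\<dots> = fsum (\<lambda>y. fsum (\<lambda>x. F x y))" using 2 by simp
  finally show ?thesis .
qed

lemma mser_mult_fsum: "mser_mult c d e = fsum (\<lambda>u. c u * d (e - u))"
proof -
  let ?P = "{(u, v). (\<forall>i. u i + v i = e i) \<and> c u \<noteq> 0 \<and> d v \<noteq> 0}"
  let ?S = "{u. c u * d (e - u) \<noteq> 0}"
  have eq: "(\<forall>i. u i + v i = e i) \<longleftrightarrow> v = e - u" for u v :: ex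
    by (auto simp: fun_eq_iff algebra_simps)
  have "bij_betw (\<lambda>u. (u, e - u)) ?S ?P"
    unfolding bij_betw_def inj_on_def by (auto simp: eq image_iff)
  from sum.reindex_bij_betw[OF this, of "\<lambda>(u,v). c u * d v"]
  show ?thesis unfolding mser_mult_def fsum_def by simp
qed

lemma ser_mult_fsum: "ser_mult f g q = fsum (\<lambda>u. f u * g (q - u))"
proof -
  let ?P = "{(u, v). u + v = q \<and> f u \<noteq> 0 \<and> g v \<noteq> 0}"
  let ?S = "{u. f u * g (q - u) \<noteq> 0}"
  have "bij_betw (\<lambda>u. (u, q - u)) ?S ?P"
    unfolding bij_betw_def inj_on_def by (auto simp: image_iff)
  from sum.reindex_bij_betw[OF this, of "\<lambda>(u,v). f u * g v"]
  show ?thesis unfolding ser_mult_def fsum_def by simp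
qed



definition lat :: "nat \<Rightarrow> int \<Rightarrow> nat \<Rightarrow> ex set" where
  "lat k N m = {e. (\<forall>j\<ge>m. e j = 0) \<and> (\<forall>j. (\<exists>z::int. e j = of_int z / of_nat k) \<and> of_int N \<le> e j)}"

definition good :: "mser \<Rightarrow> bool" where
  "good c \<longleftrightarrow> (\<exists>k>0. \<exists>N m. {e. c e \<noteq> 0} \<subseteq> lat k N m)"

lemma lat_mono: assumes "k > 0" "k dvd k'" "k' > 0" "N' \<le> N" "m \<le> m'"
  shows "lat k N m \<subseteq> lat k' N' m'"
proof
  fix e assume e: "e \<in> lat k N m"
  obtain t where t: "k' = k * t" using assms(2) by auto
  have "\<exists>z::int. e j = of_int z / of_nat k'" for j
  proof -
    obtain z :: int where "e j = of_int z / of_nat k" using e unfolding lat_def by auto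
    moreover have "t > 0" using t assms by auto
    ultimately have "e j = of_int (z * int t) / of_nat k'" using t assms(1) by (simp add: field_simps)
    then show ?thesis by blast
  qed
  moreover have "of_int N' \<le> e j" for j
    using e assms(4) unfolding lat_def by (auto intro: order_trans[of _ "of_int N"])
  ultimately show "e \<in> lat k' N' m'" using e assms(5) unfolding lat_def by auto
qed

lemma good_lat: assumes "good c"
  shows "\<exists>k>0. \<exists>N m. \<forall>k' N' m'. k dvd k' \<and> k' > 0 \<and> N' \<le> N \<and> m \<le> m' \<longrightarrow>
           {e. c e \<noteq> 0} \<subseteq> lat k' N' m'"
  using assms lat_mono unfolding good_def by (meson order_trans)

lemma good_common2: assumes "good c" "good d"
  shows "\<exists>k>0. \<exists>N m. {e. c e \<noteq> 0} \<subseteq> lat k N m \<and> {e. d e \<noteq> 0} \<subseteq> lat k N m"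
proof -
  obtain k1 N1 m1 where 1: "k1 > 0" "\<forall>k' N' m'. k1 dvd k' \<and> k' > 0 \<and> N' \<le> N1 \<and> m1 \<le> m' \<longrightarrow>
           {e. c e \<noteq> 0} \<subseteq> lat k' N' m'" using good_lat[OF assms(1)] by blast
  obtain k2 N2 m2 where 2: "k2 > 0" "\<forall>k' N' m'. k2 dvd k' \<and> k' > 0 \<and> N' \<le> N2 \<and> m2 \<le> m' \<longrightarrow>
           {e. d e \<noteq> 0} \<subseteq> lat k' N' m'" using good_lat[OF assms(2)] by blast
  have "{e. c e \<noteq> 0} \<subseteq> lat (k1*k2) (min N1 N2) (max m1 m2)" using 1 2 by simp
  moreover have "{e. d e \<noteq> 0} \<subseteq> lat (k1*k2) (min N1 N2) (max m1 m2)" using 1 2 by simp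
  moreover have "k1 * k2 > 0" using 1 2 by simp
  ultimately show ?thesis by blast
qed

lemma good_common3: assumes "good c" "good d" "good f"
  shows "\<exists>k>0. \<exists>N m. {e. c e \<noteq> 0} \<subseteq> lat k N m \<and> {e. d e \<noteq> 0} \<subseteq> lat k N m
     \<and> {e. f e \<noteq> 0} \<subseteq> lat k N m"
proof -
  obtain k1 N1 m1 where 1: "k1 > 0" "\<forall>k' N' m'. k1 dvd k' \<and> k' > 0 \<and> N' \<le> N1 \<and> m1 \<le> m' \<longrightarrow>
           {e. c e \<noteq> 0} \<subseteq> lat k' N' m'" using good_lat[OF assms(1)] by blast
  obtain k2 N2 m2 where 2: "k2 > 0" "\<forall>k' N' m'. k2 dvd k' \<and> k' > 0 \<and> N' \<le> N2 \<and> m2 \<le> m' \<longrightarrow>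
           {e. d e \<noteq> 0} \<subseteq> lat k' N' m'" using good_lat[OF assms(2)] by blast
  obtain k3 N3 m3 where 3: "k3 > 0" "\<forall>k' N' m'. k3 dvd k' \<and> k' > 0 \<and> N' \<le> N3 \<and> m3 \<le> m' \<longrightarrow>
           {e. f e \<noteq> 0} \<subseteq> lat k' N' m'" using good_lat[OF assms(3)] by blast
  have "{e. c e \<noteq> 0} \<subseteq> lat (k1*k2*k3) (min N1 (min N2 N3)) (max m1 (max m2 m3))"
    by (rule 1(2)[rule_format]) (use 1 2 3 in auto)
  moreover have "{e. d e \<noteq> 0} \<subseteq> lat (k1*k2*k3) (min N1 (min N2 N3)) (max m1 (max m2 m3))"
    by (rule 2(2)[rule_format]) (use 1 2 3 in \<open>auto intro: dvd_mult2 dvd_mult dvd_refl\<close>)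
  moreover have "{e. f e \<noteq> 0} \<subseteq> lat (k1*k2*k3) (min N1 (min N2 N3)) (max m1 (max m2 m3))"
    by (rule 3(2)[rule_format]) (use 1 2 3 in \<open>auto intro: dvd_mult2 dvd_mult dvd_refl\<close>)
  moreover have "k1 * k2 * k3 > 0" using 1 2 3 by simp
  ultimately show ?thesis by blast
qed

lemma lat_ge: "e \<in> lat k N m \<Longrightarrow> of_int N \<le> e j" unfolding lat_def by blast
lemma lat_zero: "e \<in> lat k N m \<Longrightarrow> m \<le> j \<Longrightarrow> e j = 0" unfolding lat_def by blast
lemma lat_int: "e \<in> lat k N m \<Longrightarrow> \<exists>z::int. e j = of_int z / of_nat k" unfolding lat_def by blast
lemma latI: "(\<And>j. m \<le> j \<Longrightarrow> e j = 0) \<Longrightarrow> (\<And>j. \<exists>z::int. e j = of_int z / of_nat k)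
   \<Longrightarrow> (\<And>j. of_int N \<le> e j) \<Longrightarrow> e \<in> lat k N m" unfolding lat_def by blast

lemma lat_add: assumes "u \<in> lat k N m" "v \<in> lat k N m" shows "u + v \<in> lat k (2*N) m"
proof -
  have "\<exists>z::int. (u + v) j = of_int z / of_nat k" for j
  proof -
    obtain z1 :: int where "u j = of_int z1 / of_nat k" using assms(1) unfolding lat_def by auto
    moreover obtain z2 :: int where "v j = of_int z2 / of_nat k" using assms(2) unfolding lat_def by auto
    ultimately have "(u + v) j = of_int (z1 + z2) / of_nat k" by (simp add: add_divide_distrib)
    then show ?thesis by blast
  qed
  moreover have "of_int (2*N) \<le> (u + v) j" for j using lat_ge[OF assms(1), of j] lat_ge[OF assms(2), of j] by simp
  ultimately show ?thesis using lat_zero[OF assms(1)] lat_zero[OF assms(2)] by (intro latI) auto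
qed

lemma finite_box: assumes "k > 0" shows "finite {u. u \<in> lat k N m \<and> (\<forall>j. u j \<le> h j)}"
proof -
  let ?B = "{u. u \<in> lat k N m \<and> (\<forall>j. u j \<le> h j)}"
  let ?Q = "\<Union>j<m. (\<lambda>z. of_int z / of_nat k :: rat) ` {N * int k .. \<lceil>h j * of_nat k\<rceil>}"
  have fQ: "finite ?Q" by auto
  have inj: "inj_on (\<lambda>u. map u [0..<m]) ?B"
  proof (rule inj_onI)
    fix u v assume u: "u \<in> ?B" and v: "v \<in> ?B" and eq: "map u [0..<m] = map v [0..<m]"
    show "u = v"
    proof
      fix j show "u j = v j"
      proof (cases "j < m")
        case True then show ?thesis using eq by (metis map_eq_conv atLeastLessThan_iff set_upt zero_le)
      next
        case False then show ?thesis using u v lat_zero[of u k N m j] lat_zero[of v k N m j] by auto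
      qed
    qed
  qed
  have sub: "(\<lambda>u. map u [0..<m]) ` ?B \<subseteq> {xs. set xs \<subseteq> ?Q \<and> length xs = m}"
  proof safe
    fix u x assume u: "u \<in> lat k N m" "\<forall>j. u j \<le> h j" and x: "x \<in> set (map u [0..<m])"
    then obtain j where j: "j < m" "x = u j" by auto
    obtain z :: int where z: "u j = of_int z / of_nat k" using lat_int[OF u(1)] by blast
    have kq: "(0::rat) < of_nat k" using assms by simp
    have "of_int N \<le> u j" using lat_ge[OF u(1)] by auto
    then have "of_int N * of_nat k \<le> (of_int z :: rat)" using z kq by (simp add: field_simps)
    then have lo: "N * int k \<le> z" by (metis of_int_le_iff of_int_mult of_int_of_nat_eq)
    have "u j \<le> h j" using u by auto
    then have "(of_int z :: rat) \<le> h j * of_nat k" using z kq by (simp add: field_simps)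
    then have hi: "z \<le> \<lceil>h j * of_nat k\<rceil>" by (meson le_of_int_ceiling order_trans of_int_le_iff)
    show "x \<in> ?Q" by (rule UN_I[of j]) (use j z lo hi in \<open>auto intro!: rev_image_eqI[of z]\<close>)
  qed auto
  have "finite ((\<lambda>u. map u [0..<m]) ` ?B)"
    by (rule finite_subset[OF sub finite_lists_length_eq[OF fQ]])
  then show ?thesis using finite_imageD[OF _ inj] by blast
qed

definition one_m :: mser where "one_m = (\<lambda>e. if e = 0 then 1 else 0)"

lemma good_zero: "good (\<lambda>e. 0)" unfolding good_def by auto
lemma good_one: "good one_m" unfolding good_def one_m_def lat_def
  by (intro exI[of _ 1] conjI exI[of _ 0]) (auto intro!: exI[of _ 0])
lemma good_add: assumes "good c" "good d" shows "good (c + d)"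
proof -
  obtain k N m where k: "k > 0" "{e. c e \<noteq> 0} \<subseteq> lat k N m" "{e. d e \<noteq> 0} \<subseteq> lat k N m"
    using good_common2[OF assms] by blast
  have "{e. (c + d) e \<noteq> 0} \<subseteq> {e. c e \<noteq> 0} \<union> {e. d e \<noteq> 0}" by auto
  then have "{e. (c + d) e \<noteq> 0} \<subseteq> lat k N m" using k(2,3) by blast
  then show ?thesis using k(1) unfolding good_def by blast
qed
lemma good_uminus: "good c \<Longrightarrow> good (- c)"
  unfolding good_def by auto
lemma good_minus: "good c \<Longrightarrow> good d \<Longrightarrow> good (c - d)"
  using good_add[of c "- d"] good_uminus[of d] by simp

lemma fiber_finite: fixes c d :: mser assumes "k > 0" "{e. c e \<noteq> 0} \<subseteq> lat k N m" "{e. d e \<noteq> 0} \<subseteq> lat k N m"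
  shows "finite {u. c u * d (e - u) \<noteq> 0}"
proof (rule finite_subset[OF _ finite_box[OF assms(1), of N m "\<lambda>j. e j - of_int N"]], safe)
  fix u assume "c u * d (e - u) \<noteq> 0"
  then have "c u \<noteq> 0" "d (e - u) \<noteq> 0" by auto
  then have 1: "u \<in> lat k N m" "e - u \<in> lat k N m" using assms by auto
  show "u \<in> lat k N m" by fact
  show "u j \<le> e j - of_int N" for j using lat_ge[OF 1(2), of j] by simp
qed

lemma good_fiber: "good c \<Longrightarrow> good d \<Longrightarrow> finite {u. c u * d (e - u) \<noteq> 0}"
  using good_common2[of c d] fiber_finite by blast

lemma good_mult: assumes "good c" "good d" shows "good (mser_mult c d)"
proof -
  obtain k N m where k: "k > 0" "{e. c e \<noteq> 0} \<subseteq> lat k N m" "{e. d e \<noteq> 0} \<subseteq> lat k N m"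
    using good_common2[OF assms] by blast
  have "{e. mser_mult c d e \<noteq> 0} \<subseteq> lat k (2*N) m"
  proof safe
    fix e assume "mser_mult c d e \<noteq> 0"
    then obtain u where "c u * d (e - u) \<noteq> 0" unfolding mser_mult_fsum using fsum_nonzero by blast
    then have "c u \<noteq> 0" "d (e - u) \<noteq> 0" by auto
    then have "u \<in> lat k N m" "e - u \<in> lat k N m" using k by auto
    from lat_add[OF this] show "e \<in> lat k (2*N) m" by simp
  qed
  then show ?thesis unfolding good_def using k by blast
qed

lemma mult_comm_m: "mser_mult c d = mser_mult d c"
proof
  fix e
  have "bij (\<lambda>v. e - v :: ex)" by (rule bij_betw_byWitness[of _ "\<lambda>v. e - v"]) auto
  from fsum_bij[OF this, of "\<lambda>u. c u * d (e - u)"]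
  show "mser_mult c d e = mser_mult d c e" unfolding mser_mult_fsum by (simp add: mult.commute)
qed

lemma mult_assoc_m: assumes "good c" "good d" "good f"
  shows "mser_mult (mser_mult c d) f = mser_mult c (mser_mult d f)"
proof
  fix e
  obtain k N m where k: "k > 0" "{e. c e \<noteq> 0} \<subseteq> lat k N m" "{e. d e \<noteq> 0} \<subseteq> lat k N m"
     "{e. f e \<noteq> 0} \<subseteq> lat k N m"
    using good_common3[OF assms] by blast
  let ?F = "\<lambda>w u. c u * d (w - u) * f (e - w)"
  have fin: "finite {(w, u). ?F w u \<noteq> 0}"
  proof (rule finite_subset[OF _ finite_cartesian_product[OF
        finite_box[OF k(1), of "2*N" m "\<lambda>j. e j - of_int N"] finite_box[OF k(1), of N m "\<lambda>j. e j - 2 * of_int N"]]], safe)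
    fix w u assume "?F w u \<noteq> 0"
    then have "c u \<noteq> 0" "d (w - u) \<noteq> 0" "f (e - w) \<noteq> 0" by auto
    then have 1: "u \<in> lat k N m" "w - u \<in> lat k N m" "e - w \<in> lat k N m" using k by auto
    from lat_add[OF 1(1,2)] have w: "w \<in> lat k (2*N) m" by simp
    show "w \<in> lat k (2*N) m" by fact
    show "u \<in> lat k N m" by fact
    show "w j \<le> e j - of_int N" for j using lat_ge[OF 1(3), of j] by simp
    show "u j \<le> e j - 2 * of_int N" for j using lat_ge[OF 1(3), of j] lat_ge[OF 1(2), of j] by simp
  qed
  have "mser_mult (mser_mult c d) f e = fsum (\<lambda>w. fsum (\<lambda>u. ?F w u))"
    unfolding mser_mult_fsum[of "mser_mult c d"] unfolding mser_mult_fsum fsum_multc by simp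
  also have "\<dots> = fsum (\<lambda>u. fsum (\<lambda>w. ?F w u))" by (rule fsum_swap[OF fin])
  also have "\<dots> = fsum (\<lambda>u. c u * fsum (\<lambda>w. d (w - u) * f (e - w)))"
    unfolding fsum_cmult[symmetric] by (simp add: mult.assoc)
  also have "\<dots> = fsum (\<lambda>u. c u * fsum (\<lambda>v. d v * f (e - u - v)))"
  proof -
    have "fsum (\<lambda>w. d (w - u) * f (e - w)) = fsum (\<lambda>v. d v * f (e - u - v))" for u
    proof -
      have "bij (\<lambda>v. v + u :: ex)" by (rule bij_betw_byWitness[of _ "\<lambda>v. v - u"]) auto
      from fsum_bij[OF this, of "\<lambda>w. d (w - u) * f (e - w)"] show ?thesis
        by (simp add: algebra_simps)
    qed
    then show ?thesis by simp
  qed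
  also have "\<dots> = mser_mult c (mser_mult d f) e"
    unfolding mser_mult_fsum[of c] unfolding mser_mult_fsum by simp
  finally show "mser_mult (mser_mult c d) f e = mser_mult c (mser_mult d f) e" .
qed

lemma distrib_m: assumes "good c" "good d" "good f"
  shows "mser_mult c (d + f) = mser_mult c d + mser_mult c f"
proof
  fix e
  have "mser_mult c (d + f) e = fsum (\<lambda>u. c u * d (e - u) + c u * f (e - u))"
    unfolding mser_mult_fsum by (simp add: algebra_simps)
  also have "\<dots> = mser_mult c d e + mser_mult c f e"
    unfolding mser_mult_fsum by (rule fsum_add[OF good_fiber good_fiber]) (use assms in auto)
  finally show "mser_mult c (d + f) e = (mser_mult c d + mser_mult c f) e" by simp
qed

lemma one_mult_m: "mser_mult one_m c = c"
proof
  fix e show "mser_mult one_m c e = c e"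
    unfolding mser_mult_fsum by (subst fsum_single[of _ 0]) (auto simp: one_m_def)
qed

lemma zero_mult_m: "mser_mult (\<lambda>e. 0) c = (\<lambda>e. 0)"
  unfolding mser_mult_fsum by simp



definition lexless :: "ex \<Rightarrow> ex \<Rightarrow> bool" where
  "lexless u v \<longleftrightarrow> (\<exists>j. (\<forall>i<j. u i = v i) \<and> u j < v j)"

lemma lexless_irrefl: "\<not> lexless u u" unfolding lexless_def by auto

lemma lexless_add: assumes "lexless a b" "lexless c d \<or> c = d" shows "lexless (a + c) (b + d)"
proof -
  obtain j1 where j1: "\<forall>i<j1. a i = b i" "a j1 < b j1" using assms(1) unfolding lexless_def by blast
  show ?thesis
  proof (cases "c = d")
    case True then show ?thesis using j1 unfolding lexless_def by (intro exI[of _ j1]) auto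
  next
    case False
    then obtain j2 where j2: "\<forall>i<j2. c i = d i" "c j2 < d j2" using assms(2) unfolding lexless_def by blast
    show ?thesis unfolding lexless_def
    proof (intro exI[of _ "min j1 j2"] conjI allI impI)
      fix i assume "i < min j1 j2" then show "(a + c) i = (b + d) i" using j1 j2 by auto
    next
      show "(a + c) (min j1 j2) < (b + d) (min j1 j2)"
      proof (cases "j1 < j2")
        case True then show ?thesis using j1 j2 by (simp add: min_def)
      next
        case False
        then have "j2 \<le> j1" by simp
        then show ?thesis using j1 j2 by (cases "j2 = j1") (auto simp: min_def add_le_less_mono)
      qed
    qed
  qed
qed

definition mu_c :: "nat \<Rightarrow> int \<Rightarrow> nat \<Rightarrow> ex \<Rightarrow> nat" where
  "mu_c k N r u = nat \<lfloor>(u r - of_int N) * of_nat k\<rfloor>"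

lemma mu_c_eq: assumes "u \<in> lat k N m" "k > 0"
  shows "of_nat (mu_c k N r u) = (u r - of_int N) * of_nat k"
proof -
  obtain z :: int where z: "u r = of_int z / of_nat k" using lat_int[OF assms(1)] by blast
  have "(u r - of_int N) * of_nat k = of_int (z - N * int k)" using z assms(2) by (simp add: field_simps)
  moreover have "of_int N \<le> u r" using lat_ge[OF assms(1)] .
  ultimately have "z - N * int k \<ge> 0" using assms(2)
    by (metis diff_ge_0_iff_ge mult_nonneg_nonneg of_int_0_le_iff of_nat_0_le_iff)
  then show ?thesis unfolding mu_c_def using \<open>(u r - of_int N) * of_nat k = of_int (z - N * int k)\<close>
    by (metis floor_of_int of_int_of_nat_eq int_nat_eq of_int_eq_iff nat_0_le)
qed

lemma mu_c_le: assumes "u \<in> lat k N m" "v \<in> lat k N m" "k > 0" "mu_c k N r u \<le> mu_c k N r v"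
  shows "u r \<le> v r"
proof -
  have "(of_nat (mu_c k N r u) :: rat) \<le> of_nat (mu_c k N r v)" using assms(4) by simp
  then have "(u r - of_int N) * of_nat k \<le> (v r - of_int N) * of_nat k"
    using mu_c_eq[OF assms(1,3)] mu_c_eq[OF assms(2,3)] by simp
  then show ?thesis using assms(3) by simp
qed

lemma lex_min_aux: assumes "k > 0" "u00 \<in> S" "S \<subseteq> lat k N m"
  shows "\<exists>u0\<in>S. \<forall>u\<in>S. (\<forall>i<r. u i = u0 i) \<or> (\<exists>j<r. (\<forall>i<j. u0 i = u i) \<and> u0 j < u j)"
proof (induction r)
  case 0 then show ?case using assms(2) by blast
next
  case (Suc r)
  then obtain u0 where u0: "u0 \<in> S" "\<forall>u\<in>S. (\<forall>i<r. u i = u0 i) \<or> (\<exists>j<r. (\<forall>i<j. u0 i = u i) \<and> u0 j < u j)"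
    by blast
  let ?S' = "{u\<in>S. \<forall>i<r. u i = u0 i}"
  obtain u1 where u1: "u1 \<in> ?S'" "\<forall>y. y \<in> ?S' \<longrightarrow> mu_c k N r u1 \<le> mu_c k N r y"
    using ex_has_least_nat[of "\<lambda>u. u \<in> ?S'" u0 "mu_c k N r"] u0(1) by auto
  show ?case
  proof (intro bexI[of _ u1] ballI)
    fix u assume u: "u \<in> S"
    show "(\<forall>i<Suc r. u i = u1 i) \<or> (\<exists>j<Suc r. (\<forall>i<j. u1 i = u i) \<and> u1 j < u j)"
    proof (cases "u \<in> ?S'")
      case True
      then have le: "u1 r \<le> u r" using mu_c_le[of u1 k N m u r] u1 assms by auto
      show ?thesis
      proof (cases "u1 r = u r")
        case True
        then show ?thesis using u1(1) \<open>u \<in> ?S'\<close> by (auto simp: less_Suc_eq)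
      next
        case False
        then have "u1 r < u r" using le by simp
        then show ?thesis using u1(1) \<open>u \<in> ?S'\<close> by (intro disjI2 exI[of _ r]) auto
      qed
    next
      case False
      then obtain j where j: "j < r" "\<forall>i<j. u0 i = u i" "u0 j < u j" using u0(2) u by auto
      then show ?thesis using u1(1) by (intro disjI2 exI[of _ j]) auto
    qed
  qed (use u1 in auto)
qed

lemma lex_min: assumes "k > 0" "u00 \<in> S" "S \<subseteq> lat k N m"
  shows "\<exists>u0\<in>S. \<forall>u\<in>S. u \<noteq> u0 \<longrightarrow> lexless u0 u"
proof -
  obtain u0 where u0: "u0 \<in> S" "\<forall>u\<in>S. (\<forall>i<m. u i = u0 i) \<or> (\<exists>j<m. (\<forall>i<j. u0 i = u i) \<and> u0 j < u j)"
    using lex_min_aux[OF assms, of m] by blast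
  show ?thesis
  proof (intro bexI[OF _ u0(1)] ballI impI)
    fix u assume u: "u \<in> S" "u \<noteq> u0"
    have "\<not> (\<forall>i<m. u i = u0 i)"
    proof
      assume "\<forall>i<m. u i = u0 i"
      moreover have "u \<in> lat k N m" "u0 \<in> lat k N m" using u(1) u0(1) assms(3) by auto
      then have "\<forall>i\<ge>m. u i = u0 i" using lat_zero[of u k N m] lat_zero[of u0 k N m] by simp
      ultimately have "u = u0" by (metis ext not_le)
      then show False using u(2) by simp
    qed
    then show "lexless u0 u" using u0(2) u(1) unfolding lexless_def by blast
  qed
qed

lemma no_zero_div_m: assumes "good c" "good d" "c \<noteq> (\<lambda>e. 0)" "d \<noteq> (\<lambda>e. 0)"
  shows "mser_mult c d \<noteq> (\<lambda>e. 0)"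
proof -
  obtain k N m where k: "k > 0" "{e. c e \<noteq> 0} \<subseteq> lat k N m" "{e. d e \<noteq> 0} \<subseteq> lat k N m"
    using good_common2[OF assms(1,2)] by blast
  obtain c0 where "c c0 \<noteq> 0" using assms(3) by auto
  then obtain u0 where u0: "c u0 \<noteq> 0" "\<forall>u. c u \<noteq> 0 \<longrightarrow> u \<noteq> u0 \<longrightarrow> lexless u0 u"
    using lex_min[OF k(1) _ k(2), of c0] by auto
  obtain d0 where "d d0 \<noteq> 0" using assms(4) by auto
  then obtain v0 where v0: "d v0 \<noteq> 0" "\<forall>v. d v \<noteq> 0 \<longrightarrow> v \<noteq> v0 \<longrightarrow> lexless v0 v"
    using lex_min[OF k(1) _ k(3), of d0] by auto
  have "mser_mult c d (u0 + v0) = c u0 * d (u0 + v0 - u0)"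
    unfolding mser_mult_fsum
  proof (rule fsum_single, safe)
    fix u assume nz: "c u * d (u0 + v0 - u) \<noteq> 0"
    show "u = u0"
    proof (rule ccontr)
      assume ne: "u \<noteq> u0"
      let ?v = "u0 + v0 - u"
      have cu: "c u \<noteq> 0" and dv: "d ?v \<noteq> 0" using nz by auto
      have l1: "lexless u0 u" using u0(2) cu ne by blast
      have "?v \<noteq> v0" using ne by (auto simp: algebra_simps)
      then have l2: "lexless v0 ?v" using v0(2) dv by blast
      have "lexless (u0 + v0) (u + ?v)" by (rule lexless_add[OF l1]) (use l2 in blast)
      then show False using lexless_irrefl by (simp add: algebra_simps)
    qed
  qed
  also have "\<dots> \<noteq> 0" using u0(1) v0(1) by simp
  finally show ?thesis by (metis)
qed

typedef G = "{c :: mser. good c}" morphisms RepG AbsG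
  by (rule exI[of _ "\<lambda>e. 0"]) (simp add: good_zero)

lemma good_RepG[simp]: "good (RepG x)" using RepG by simp

instantiation G :: comm_ring_1
begin
definition zero_G_def: "0 = AbsG (\<lambda>e. 0)"
definition one_G_def: "1 = AbsG one_m"
definition plus_G_def: "x + y = AbsG (RepG x + RepG y)"
definition uminus_G_def: "- x = AbsG (- RepG x)"
definition minus_G_def: "x - y = AbsG (RepG x - RepG y)"
definition times_G_def: "x * y = AbsG (mser_mult (RepG x) (RepG y))"

lemma RepG_zero[simp]: "RepG 0 = (\<lambda>e. 0)" unfolding zero_G_def by (simp add: AbsG_inverse good_zero)
lemma RepG_one[simp]: "RepG 1 = one_m" unfolding one_G_def by (simp add: AbsG_inverse good_one)
lemma RepG_plus[simp]: "RepG (x + y) = RepG x + RepG y" unfolding plus_G_def by (simp add: AbsG_inverse good_add)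
lemma RepG_uminus[simp]: "RepG (- x) = - RepG x" unfolding uminus_G_def by (simp add: AbsG_inverse good_uminus)
lemma RepG_minus[simp]: "RepG (x - y) = RepG x - RepG y" unfolding minus_G_def by (simp add: AbsG_inverse good_minus)
lemma RepG_times[simp]: "RepG (x * y) = mser_mult (RepG x) (RepG y)" unfolding times_G_def by (simp add: AbsG_inverse good_mult)

instance
proof
  fix a b c :: G
  show "a * b * c = a * (b * c)" by (simp add: RepG_inject[symmetric] mult_assoc_m)
  show "a * b = b * a" by (simp add: RepG_inject[symmetric] mult_comm_m)
  show "1 * a = a" by (simp add: RepG_inject[symmetric] one_mult_m)
  show "a + b + c = a + (b + c)" by (simp add: RepG_inject[symmetric] add.assoc)
  show "a + b = b + a" by (simp add: RepG_inject[symmetric] add.commute)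
  show "0 + a = a" by (simp add: RepG_inject[symmetric] fun_eq_iff)
  show "- a + a = 0" by (simp add: RepG_inject[symmetric] fun_eq_iff)
  show "a - b = a + - b" by (simp add: RepG_inject[symmetric] fun_eq_iff)
  show "(a + b) * c = a * c + b * c"
    by (simp add: RepG_inject[symmetric] mult_comm_m[of _ "RepG c"] distrib_m)
  show "(0::G) \<noteq> 1" by (simp add: RepG_inject[symmetric] one_m_def fun_eq_iff) (metis zero_fun_apply)
qed
end

instance G :: idom
proof
  fix a b :: G assume "a \<noteq> 0" "b \<noteq> 0"
  then show "a * b \<noteq> 0" using no_zero_div_m[of "RepG a" "RepG b"]
    by (simp add: RepG_inject[symmetric])
qed



definition onj :: "nat \<Rightarrow> ex \<Rightarrow> bool" where "onj j e \<longleftrightarrow> (\<forall>i. i \<noteq> j \<longrightarrow> e i = 0)"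

definition sig :: "nat \<Rightarrow> ser \<Rightarrow> mser" where
  "sig j f = (\<lambda>e. if onj j e then f (e j) else 0)"

definition sng :: "nat \<Rightarrow> rat \<Rightarrow> ex" where "sng j r = (\<lambda>i. if i = j then r else 0)"

lemma inj_sng: "inj (sng j)" unfolding sng_def inj_def by (metis)

lemma sig_mult: "sig j (ser_mult f g) = mser_mult (sig j f) (sig j g)"
proof
  fix e
  show "sig j (ser_mult f g) e = mser_mult (sig j f) (sig j g) e"
  proof (cases "onj j e")
    case True
    have "mser_mult (sig j f) (sig j g) e = fsum (\<lambda>u. sig j f u * sig j g (e - u))"
      by (rule mser_mult_fsum)
    also have "\<dots> = fsum (\<lambda>r. sig j f (sng j r) * sig j g (e - sng j r))"
    proof (rule fsum_inj[OF inj_sng, symmetric], safe)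
      fix u assume "sig j f u * sig j g (e - u) \<noteq> 0"
      then have "\<forall>i. i \<noteq> j \<longrightarrow> u i = 0" unfolding sig_def onj_def by (auto split: if_splits)
      then have "u = sng j (u j)" unfolding sng_def by auto
      then show "u \<in> range (sng j)" by blast
    qed
    also have "\<dots> = fsum (\<lambda>r. f r * g (e j - r))"
      using True unfolding sig_def sng_def onj_def by simp
    also have "\<dots> = sig j (ser_mult f g) e"
      using True unfolding sig_def ser_mult_fsum by simp
    finally show ?thesis ..
  next
    case False
    have z: "(\<lambda>u. sig j f u * sig j g (e - u)) = (\<lambda>u. 0)"
    proof
      fix u
      show "sig j f u * sig j g (e - u) = 0"
      proof (rule ccontr)
        assume "sig j f u * sig j g (e - u) \<noteq> 0"
        then have "\<forall>i. i \<noteq> j \<longrightarrow> u i = 0" "\<forall>i. i \<noteq> j \<longrightarrow> (e - u) i = 0"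
          unfolding sig_def onj_def by (auto split: if_splits)
        then show False using False unfolding onj_def by auto
      qed
    qed
    have "mser_mult (sig j f) (sig j g) e = 0" unfolding mser_mult_fsum z by simp
    then show ?thesis using False unfolding sig_def by simp
  qed
qed

lemma sig_diff: "sig j (ser_diff f g) = sig j f - sig j g"
  unfolding sig_def ser_diff_def by (auto simp: fun_eq_iff)
lemma sig_zero: "sig j ser_zero = (\<lambda>e. 0)"
  unfolding sig_def ser_zero_def by (auto simp: fun_eq_iff)
lemma sig_one: "sig j ser_one = one_m"
  unfolding sig_def ser_one_def one_m_def onj_def by (auto simp: fun_eq_iff)
lemma sig_sum: "sig j (\<lambda>q. \<Sum>i\<in>I. F i q) = (\<lambda>e. \<Sum>i\<in>I. sig j (F i) e)"
proof (rule ext)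
  fix e show "sig j (\<lambda>q. \<Sum>i\<in>I. F i q) e = (\<Sum>i\<in>I. sig j (F i) e)"
    by (cases "onj j e") (simp_all add: sig_def)
qed
lemma sig_cmult: "sig j (\<lambda>q. c * f q) = (\<lambda>e. c * sig j f e)"
  unfolding sig_def by (auto simp: fun_eq_iff)

lemma good_sig: assumes "f \<in> puiseux" shows "good (sig j f)"
proof -
  obtain k N where k: "k > 0" "\<forall>q. f q \<noteq> 0 \<longrightarrow> (\<exists>z::int. q = of_int z / of_nat k) \<and> of_int N \<le> q"
    using assms unfolding puiseux_def by blast
  have "{e. sig j f e \<noteq> 0} \<subseteq> lat k (min N 0) (Suc j)"
  proof safe
    fix e assume e: "sig j f e \<noteq> 0"
    then have z: "\<forall>i. i \<noteq> j \<longrightarrow> e i = 0" and fe: "f (e j) \<noteq> 0" unfolding sig_def onj_def by (auto split: if_splits)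
    show "e \<in> lat k (min N 0) (Suc j)"
    proof (rule latI)
      fix i show "\<exists>z::int. e i = of_int z / of_nat k"
        using z k(2) fe by (cases "i = j") (auto intro: exI[of _ 0])
      show "of_int (min N 0) \<le> e i"
        using z k(2) fe by (cases "i = j") (auto intro: order_trans[of _ "of_int N"])
    qed (use z in auto)
  qed
  then show ?thesis unfolding good_def using k(1) by blast
qed

lemma laurent_puiseux: "f \<in> laurent_poly \<Longrightarrow> f \<in> puiseux"
proof -
  assume f: "f \<in> laurent_poly"
  let ?S = "{q. f q \<noteq> 0}"
  have fin: "finite ?S" and int: "\<forall>q\<in>?S. q \<in> \<int>" using f unfolding laurent_poly_def by auto
  define N where "N = (if ?S = {} then 0 else \<lfloor>Min ?S\<rfloor>)"
  have "\<forall>q. f q \<noteq> 0 \<longrightarrow> (\<exists>z::int. q = of_int z / of_nat 1) \<and> of_int N \<le> q"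
  proof safe
    fix q assume q: "f q \<noteq> 0"
    then show "\<exists>z::int. q = of_int z / of_nat 1" using int by (auto elim: Ints_cases)
    have "Min ?S \<le> q" using q fin by simp
    then show "of_int N \<le> q" unfolding N_def using q by (auto intro: order_trans[OF of_int_floor_le])
  qed
  then show ?thesis unfolding puiseux_def by (intro CollectI exI[of _ 1]) auto
qed

lemma RepG_AbsG: "good c \<Longrightarrow> RepG (AbsG c) = c" by (simp add: AbsG_inverse)

lemma RepG_sum: "RepG (sum f I) = (\<lambda>e. \<Sum>i\<in>I. RepG (f i) e)"
proof (induction I rule: infinite_finite_induct)
  case (insert x F) then show ?case by (simp add: fun_eq_iff)
qed (auto simp: fun_eq_iff)

lemma RepG_neg1pow: "RepG ((-1)^j * Z) = (\<lambda>e. (-1)^j * RepG Z e)"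
  by (cases "even j") (auto simp: fun_eq_iff)

lemma RepG_prod_list: "(\<forall>x\<in>set xs. good (sig j x)) \<Longrightarrow>
  sig j (foldr ser_mult xs ser_one) = RepG (prod_list (map (\<lambda>x. AbsG (sig j x)) xs))"
  by (induction xs) (auto simp: sig_one sig_mult RepG_AbsG)

fun gdet :: "nat \<Rightarrow> (nat \<Rightarrow> nat \<Rightarrow> G) \<Rightarrow> G" where
  "gdet 0 M = 1"
| "gdet (Suc k) M = (\<Sum>j<Suc k. (-1) ^ j * (M 0 j * gdet k (minor M 0 j)))"

lemma sig_det: "(\<forall>a<k. \<forall>b<k. good (sig l (M a b))) \<Longrightarrow>
  sig l (ser_det k M) = RepG (gdet k (\<lambda>a b. AbsG (sig l (M a b))))"
proof (induction k arbitrary: M)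
  case 0 then show ?case by (simp add: sig_one)
next
  case (Suc k)
  have mi: "\<forall>a<k. \<forall>b<k. good (sig l (minor M 0 j a b))" if "j < Suc k" for j
    using Suc.prems unfolding minor_def by auto
  have mi2: "minor (\<lambda>a b. AbsG (sig l (M a b))) 0 j = (\<lambda>a b. AbsG (sig l (minor M 0 j a b)))" for j
    unfolding minor_def by simp
  have "sig l (ser_det (Suc k) M) = (\<lambda>e. \<Sum>j<Suc k. (-1)^j * mser_mult (sig l (M 0 j)) (sig l (ser_det k (minor M 0 j))) e)"
    by (simp only: ser_det.simps sig_sum sig_cmult sig_mult)
  also have "\<dots> = (\<lambda>e. \<Sum>j<Suc k. (-1)^j * RepG (AbsG (sig l (M 0 j)) * gdet k (\<lambda>a b. AbsG (sig l (minor M 0 j a b)))) e)"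
    using Suc.IH[OF mi] Suc.prems by (auto simp: RepG_AbsG intro!: sum.cong)
  also have "\<dots> = RepG (gdet (Suc k) (\<lambda>a b. AbsG (sig l (M a b))))"
    by (simp only: gdet.simps RepG_sum RepG_neg1pow mi2)
  finally show ?case .
qed

lemma gdet_det: "gdet k M = det (mat k k (\<lambda>(a, b). M a b))"
proof (induction k arbitrary: M)
  case 0 then show ?case by simp
next
  case (Suc k)
  let ?A = "mat (Suc k) (Suc k) (\<lambda>(a, b). M a b)"
  have A: "?A \<in> carrier_mat (Suc k) (Suc k)" by simp
  have del: "mat_delete ?A 0 j = mat k k (\<lambda>(a, b). minor M 0 j a b)" if "j < Suc k" for j
    by (rule eq_matI) (use that in \<open>auto simp: mat_delete_def minor_def\<close>)
  have "det ?A = (\<Sum>j<Suc k. ?A $$ (0, j) * cofactor ?A 0 j)"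
    by (rule laplace_expansion_row[OF A]) simp
  also have "\<dots> = (\<Sum>j<Suc k. (-1) ^ j * (M 0 j * gdet k (minor M 0 j)))"
    by (rule sum.cong) (auto simp: cofactor_def del Suc.IH)
  finally show ?case by simp
qed



lemma tens_0: "tens 0 fs = one_m"
  unfolding tens_def one_m_def by (auto simp: fun_eq_iff)

lemma tens_Suc: "tens (Suc m) fs = mser_mult (tens m fs) (sig m (fs m))"
proof
  fix e
  show "tens (Suc m) fs e = mser_mult (tens m fs) (sig m (fs m)) e"
  proof (cases "\<forall>j\<ge>Suc m. e j = 0")
    case True
    let ?u0 = "e(m := 0)"
    have "mser_mult (tens m fs) (sig m (fs m)) e = tens m fs ?u0 * sig m (fs m) (e - ?u0)"
      unfolding mser_mult_fsum
    proof (rule fsum_single, safe)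
      fix u assume nz: "tens m fs u * sig m (fs m) (e - u) \<noteq> 0"
      then have a: "\<forall>j\<ge>m. u j = 0" unfolding tens_def by (auto split: if_splits)
      from nz have "onj m (e - u)" unfolding sig_def by (auto split: if_splits)
      then have b: "\<forall>i. i \<noteq> m \<longrightarrow> e i = u i" unfolding onj_def by auto
      show "u = ?u0"
      proof
        fix i show "u i = ?u0 i" using a b by (cases "i = m") auto
      qed
    qed
    also have "\<dots> = (\<Prod>j<Suc m. fs j (e j))"
    proof -
      have "onj m (e - ?u0)" unfolding onj_def by auto
      moreover have "\<forall>j\<ge>m. ?u0 j = 0" using True by (auto simp: Suc_le_eq)
      moreover have "(\<Prod>j<m. fs j (?u0 j)) = (\<Prod>j<m. fs j (e j))" by (rule prod.cong) auto
      ultimately show ?thesis unfolding tens_def sig_def by simp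
    qed
    also have "\<dots> = tens (Suc m) fs e" unfolding tens_def using True by simp
    finally show ?thesis ..
  next
    case False
    then obtain j where j: "j \<ge> Suc m" "e j \<noteq> 0" by auto
    have z: "(\<lambda>u. tens m fs u * sig m (fs m) (e - u)) = (\<lambda>u. 0)"
    proof
      fix u show "tens m fs u * sig m (fs m) (e - u) = 0"
      proof (rule ccontr)
        assume nz: "tens m fs u * sig m (fs m) (e - u) \<noteq> 0"
        then have a: "\<forall>j\<ge>m. u j = 0" unfolding tens_def by (auto split: if_splits)
        from nz have "onj m (e - u)" unfolding sig_def by (auto split: if_splits)
        then have b: "\<forall>i. i \<noteq> m \<longrightarrow> e i = u i" unfolding onj_def by auto
        show False using a b j by auto
      qed
    qed
    have "mser_mult (tens m fs) (sig m (fs m)) e = 0" unfolding mser_mult_fsum z by simp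
    moreover have "tens (Suc m) fs e = 0" unfolding tens_def using j by auto
    ultimately show ?thesis by simp
  qed
qed

lemma tens_prod: "(\<forall>j<m. fs j \<in> puiseux) \<Longrightarrow> tens m fs = RepG (\<Prod>j<m. AbsG (sig j (fs j)))"
proof (induction m)
  case 0 then show ?case by (simp add: tens_0)
next
  case (Suc m)
  then show ?case by (simp add: tens_Suc RepG_AbsG good_sig)
qed

lemma good_tens: "(\<forall>j<m. fs j \<in> puiseux) \<Longrightarrow> good (tens m fs)"
  using tens_prod[of m fs] by simp

lemma Em_good: assumes "c \<in> Em m" shows "good c"
proof -
  obtain L where L: "\<forall>fs\<in>set L. \<forall>j<m. fs j \<in> puiseux" "c = (\<lambda>e. \<Sum>fs\<leftarrow>L. tens m fs e)"
    using assms unfolding Em_def by blast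
  have "good (\<lambda>e. \<Sum>fs\<leftarrow>L. tens m fs e)" using L(1)
  proof (induction L)
    case Nil then show ?case by (simp add: good_zero)
  next
    case (Cons a L)
    have "(\<lambda>e. \<Sum>fs\<leftarrow>a # L. tens m fs e) = tens m a + (\<lambda>e. \<Sum>fs\<leftarrow>L. tens m fs e)"
      by (simp add: fun_eq_iff)
    then show ?case using Cons good_add good_tens by simp
  qed
  then show ?thesis using L(2) by simp
qed



definition mm :: "nat \<Rightarrow> (nat \<Rightarrow> nat \<Rightarrow> 'a::comm_ring_1) \<Rightarrow> (nat \<Rightarrow> nat \<Rightarrow> 'a) \<Rightarrow> (nat \<Rightarrow> nat \<Rightarrow> 'a)" where
  "mm N B C = (\<lambda>i k. if i < N \<and> k < N then \<Sum>l<N. B i l * C l k else 0)"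

definition mid :: "nat \<Rightarrow> (nat \<Rightarrow> nat \<Rightarrow> 'a::comm_ring_1)" where
  "mid N = (\<lambda>i j. if i = j \<and> i < N then 1 else 0)"

definition nz :: "nat \<Rightarrow> (nat \<Rightarrow> nat \<Rightarrow> 'a::comm_ring_1) \<Rightarrow> (nat \<Rightarrow> nat \<Rightarrow> 'a)" where
  "nz N B = (\<lambda>i k. if i < N \<and> k < N then B i k else 0)"

fun mpow :: "nat \<Rightarrow> (nat \<Rightarrow> nat \<Rightarrow> 'a::comm_ring_1) \<Rightarrow> nat \<Rightarrow> (nat \<Rightarrow> nat \<Rightarrow> 'a)" where
  "mpow N B 0 = mid N"
| "mpow N B (Suc k) = mm N (mpow N B k) B"

definition peval :: "nat \<Rightarrow> 'a::comm_ring_1 poly \<Rightarrow> (nat \<Rightarrow> nat \<Rightarrow> 'a) \<Rightarrow> (nat \<Rightarrow> nat \<Rightarrow> 'a)" where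
  "peval N p B = fold_coeffs (\<lambda>a M. (\<lambda>i j. a * mid N i j + mm N B M i j)) p (\<lambda>i j. 0)"

lemma mm_assoc: "mm N (mm N B C) D = mm N B (mm N C D)"
  unfolding mm_def
  by (auto simp: fun_eq_iff sum_distrib_left sum_distrib_right mult.assoc intro: sum.swap)

lemma mm_mid_left: "mm N (mid N) B = nz N B"
  unfolding mm_def mid_def nz_def by (auto simp: fun_eq_iff if_distrib[of "\<lambda>x. x * _"] cong: if_cong)

lemma mm_mid_right: "mm N B (mid N) = nz N B"
  unfolding mm_def mid_def nz_def by (auto simp: fun_eq_iff if_distrib[of "\<lambda>x. _ * x"] cong: if_cong)

lemma mm_cong: "(\<And>i r. i < N \<Longrightarrow> r < N \<Longrightarrow> B i r = B' i r) \<Longrightarrow>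
  (\<And>r k. r < N \<Longrightarrow> k < N \<Longrightarrow> C r k = C' r k) \<Longrightarrow> mm N B C = mm N B' C'"
  unfolding mm_def by (auto simp: fun_eq_iff intro!: sum.cong)

lemma nz_mm: "nz N (mm N B C) = mm N B C" unfolding nz_def mm_def by (auto simp: fun_eq_iff)

lemma mpow_comm: "mm N B (mpow N B k) = mm N (mpow N B k) B"
proof (induction k)
  case 0 then show ?case by (simp add: mm_mid_left mm_mid_right)
next
  case (Suc k)
  have "mm N B (mpow N B (Suc k)) = mm N (mm N B (mpow N B k)) B" by (simp add: mm_assoc)
  also have "\<dots> = mm N (mpow N B (Suc k)) B" using Suc by simp
  finally show ?case .
qed

lemma mm_add_right: "mm N B (\<lambda>i j. C i j + D i j) = (\<lambda>i j. mm N B C i j + mm N B D i j)"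
  unfolding mm_def by (auto simp: fun_eq_iff distrib_left sum.distrib)
lemma mm_diff_left: "mm N (\<lambda>i j. C i j - D i j) B = (\<lambda>i j. mm N C B i j - mm N D B i j)"
  unfolding mm_def by (auto simp: fun_eq_iff left_diff_distrib sum_subtractf)
lemma mm_scal_right: "mm N B (\<lambda>i j. c * C i j) = (\<lambda>i j. c * mm N B C i j)"
  unfolding mm_def by (auto simp: fun_eq_iff sum_distrib_left mult.left_commute)
lemma mm_zero_right: "mm N B (\<lambda>i j. 0) = (\<lambda>i j. 0)"
  unfolding mm_def by (auto simp: fun_eq_iff)
lemma mm_zero_left: "mm N (\<lambda>i j. 0) B = (\<lambda>i j. 0)"
  unfolding mm_def by (auto simp: fun_eq_iff)
lemma mm_sum_right: "mm N B (\<lambda>i j. \<Sum>k<K. F k i j) = (\<lambda>i j. \<Sum>k<K. mm N B (F k) i j)"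
  unfolding mm_def by (auto simp: fun_eq_iff sum_distrib_left intro: sum.swap)

lemma peval_0[simp]: "peval N 0 B = (\<lambda>i j. 0)"
  unfolding peval_def by simp

lemma peval_pCons: "peval N (pCons a p) B = (\<lambda>i j. a * mid N i j + mm N B (peval N p B) i j)"
proof (cases "p = 0 \<and> a = 0")
  case True then show ?thesis by (simp add: mm_zero_right)
next
  case False
  then show ?thesis unfolding peval_def by (cases "p = 0") auto
qed

lemma peval_add: "peval N (p + q) B = (\<lambda>i j. peval N p B i j + peval N q B i j)"
proof (induction p q rule: poly_induct2)
  case 0 then show ?case by simp
next
  case (pCons a p b q)
  show ?case by (simp add: peval_pCons pCons mm_add_right algebra_simps)
qed

lemma peval_smult: "peval N (Polynomial.smult c p) B = (\<lambda>i j. c * peval N p B i j)"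
proof (induction p)
  case 0 then show ?case by simp
next
  case (pCons a p)
  show ?case by (simp add: peval_pCons pCons mm_scal_right algebra_simps)
qed

lemma peval_linear: "peval N ([:- c, 1:] * q) B = (\<lambda>i j. mm N B (peval N q B) i j - c * peval N q B i j)"
proof -
  have e: "[:- c, 1:] * q = Polynomial.smult (- c) q + pCons 0 q" by simp
  have "peval N ([:- c, 1:] * q) B = peval N (Polynomial.smult (- c) q + pCons 0 q) B"
    by (subst e) (rule refl)
  also have "\<dots> = (\<lambda>i j. peval N (Polynomial.smult (- c) q) B i j + peval N (pCons 0 q) B i j)"
    by (rule peval_add)
  finally show ?thesis by (simp only: peval_smult peval_pCons) (simp add: fun_eq_iff)
qed

definition psum :: "nat \<Rightarrow> nat \<Rightarrow> 'a::comm_ring_1 poly \<Rightarrow> (nat \<Rightarrow> nat \<Rightarrow> 'a) \<Rightarrow> (nat \<Rightarrow> nat \<Rightarrow> 'a)" where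
  "psum N K p B = (\<lambda>i j. \<Sum>k<K. coeff p k * mpow N B k i j)"

lemma peval_psum: "degree p < K \<Longrightarrow> peval N p B = psum N K p B"
proof (induction p arbitrary: K)
  case 0 then show ?case by (simp add: psum_def)
next
  case (pCons a p)
  obtain K' where K: "K = Suc K'" using pCons.prems by (cases K) auto
  have "psum N K (pCons a p) B = (\<lambda>i j. a * mid N i j + (\<Sum>k<K'. coeff p k * mpow N B (Suc k) i j))"
    unfolding psum_def K by (subst sum.lessThan_Suc_shift) simp
  also have "\<dots> = (\<lambda>i j. a * mid N i j + mm N B (psum N K' p B) i j)"
  proof -
    have "mm N B (psum N K' p B) = (\<lambda>i j. \<Sum>k<K'. coeff p k * mpow N B (Suc k) i j)"
      unfolding psum_def mm_sum_right mm_scal_right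
      by (simp add: mpow_comm[symmetric])
    then show ?thesis by simp
  qed
  also have "\<dots> = peval N (pCons a p) B"
  proof (cases "p = 0")
    case True
    then have "psum N K' p B = (\<lambda>i j. 0)" unfolding psum_def by simp
    then show ?thesis using True by (simp add: peval_pCons mm_zero_right)
  next
    case False
    then have "degree p < K'" using pCons.prems K by simp
    then show ?thesis using pCons.IH by (simp add: peval_pCons)
  qed
  finally show ?case by simp
qed

lemma mpow_nz: "i \<ge> N \<or> j \<ge> N \<Longrightarrow> mpow N B k i j = 0"
  by (cases k) (auto simp: mid_def mm_def)



lemma CH: fixes Af :: "nat \<Rightarrow> nat \<Rightarrow> 'a::comm_ring_1"
  shows "peval N (char_poly (mat N N (\<lambda>(i, j). Af i j))) Af = (\<lambda>i j. 0)"
proof -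
  define A where "A = mat N N (\<lambda>(i, j). Af i j)"
  define C where "C = char_poly_matrix A"
  define D where "D = adj_mat C"
  define p where "p = char_poly A"
  have A: "A \<in> carrier_mat N N" unfolding A_def by simp
  have hC: "C \<in> carrier_mat N N" unfolding C_def using A by simp
  have hD: "D \<in> carrier_mat N N" unfolding D_def using adj_mat(1)[OF hC] .
  have adj: "D * C = det C \<cdot>\<^sub>m 1\<^sub>m N" unfolding D_def using adj_mat(3)[OF hC] .
  have pdet: "p = det C" unfolding p_def C_def char_poly_def ..
  have Cent: "C $$ (l, j) = (if l = j then [:0, 1:] else 0) + [:- Af l j:]" if "l < N" "j < N" for l j
    using that A unfolding C_def char_poly_matrix_def A_def by simp
  have entry: "(\<Sum>l<N. D $$ (i, l) * C $$ (l, j)) = (if i = j then p else 0)" if "i < N" "j < N" for i j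
  proof -
    have "(D * C) $$ (i, j) = (\<Sum>l<N. D $$ (i, l) * C $$ (l, j))"
      using that hD hC by (simp add: scalar_prod_def lessThan_atLeast0)
    moreover have "(det C \<cdot>\<^sub>m 1\<^sub>m N) $$ (i, j) = (if i = j then p else 0)"
      using that pdet by simp
    ultimately show ?thesis using adj by simp
  qed
  define Dk where "Dk k = (\<lambda>i l. coeff (D $$ (i, l)) k)" for k
  define Ek where "Ek k = (if k = 0 then (\<lambda>i j. 0) else Dk (k - 1))" for k
  have star: "Ek k i j - mm N (Dk k) Af i j = (if i = j then coeff p k else 0)" if "i < N" "j < N" for k i j
  proof -
    have "(\<Sum>l<N. D $$ (i, l) * C $$ (l, j)) = (\<Sum>l<N. (if l = j then D $$ (i, j) * [:0, 1:] else 0) + D $$ (i, l) * [:- Af l j:])"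
    proof (rule sum.cong[OF refl])
      fix l assume l: "l \<in> {..<N}"
      then have c: "C $$ (l, j) = (if l = j then [:0, 1:] else 0) + [:- Af l j:]" using Cent that by simp
      show "D $$ (i, l) * C $$ (l, j) = (if l = j then D $$ (i, j) * [:0, 1:] else 0) + D $$ (i, l) * [:- Af l j:]"
        unfolding c by (cases "l = j") (simp_all only: distrib_left if_True if_False mult_zero_right simp_thms)
    qed
    also have "\<dots> = (\<Sum>l<N. (if l = j then D $$ (i, j) * [:0, 1:] else 0)) + (\<Sum>l<N. D $$ (i, l) * [:- Af l j:])"
      by (rule sum.distrib)
    also have "\<dots> = D $$ (i, j) * [:0, 1:] + (\<Sum>l<N. D $$ (i, l) * [:- Af l j:])"
      using that by (simp only: sum.delta finite_lessThan lessThan_iff if_True)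
    finally have calc: "(\<Sum>l<N. D $$ (i, l) * C $$ (l, j)) = D $$ (i, j) * [:0, 1:] + (\<Sum>l<N. D $$ (i, l) * [:- Af l j:])" .
    have e2: "D $$ (i, j) * [:0, 1:] + (\<Sum>l<N. D $$ (i, l) * [:- Af l j:]) = (if i = j then p else 0)"
      by (rule trans[OF calc[symmetric] entry[OF that]])
    from arg_cong[OF e2, of "\<lambda>q. coeff q k"]
    have "coeff (D $$ (i, j) * [:0, 1:]) k + (\<Sum>l<N. coeff (D $$ (i, l) * [:- Af l j:]) k)
        = (if i = j then coeff p k else 0)"
      unfolding coeff_add coeff_sum by (cases "i = j") (simp_all only: if_True if_False coeff_0 simp_thms)
    moreover have "coeff (D $$ (i, j) * [:0, 1:]) k = Ek k i j"
      unfolding Ek_def Dk_def by (simp add: coeff_pCons')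
    moreover have "coeff (D $$ (i, l) * [:- Af l j:]) k = - (Dk k i l * Af l j)" for l
      unfolding Dk_def by simp
    ultimately show ?thesis using that unfolding mm_def by (simp add: sum_negf)
  qed
  define F where "F k = mm N (Ek k) (mpow N Af k)" for k
  have trm: "coeff p k * mpow N Af k i j = F k i j - F (Suc k) i j" for k i j
  proof (cases "i < N \<and> j < N")
    case True
    have "coeff p k * mpow N Af k i j = mm N (\<lambda>i r. if i = r then coeff p k else 0) (mpow N Af k) i j"
      using True unfolding mm_def by (simp add: if_distrib[of "\<lambda>x. x * _"] cong: if_cong)
    also have "\<dots> = mm N (\<lambda>i r. Ek k i r - mm N (Dk k) Af i r) (mpow N Af k) i j"
      by (rule arg_cong[of _ _ "\<lambda>M. M i j"], rule mm_cong) (use star in auto)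
    also have "\<dots> = F k i j - mm N (mm N (Dk k) Af) (mpow N Af k) i j"
      unfolding mm_diff_left F_def by simp
    also have "mm N (mm N (Dk k) Af) (mpow N Af k) = F (Suc k)"
      unfolding F_def Ek_def by (simp add: mm_assoc mpow_comm)
    finally show ?thesis .
  next
    case False
    then show ?thesis unfolding F_def mm_def using mpow_nz[of N i j Af k] by auto
  qed
  define K' where "K' = Suc (degree p + (\<Sum>i<N. \<Sum>l<N. degree (D $$ (i, l))))"
  have Dk0: "Dk K' i l = 0" if "i < N" "l < N" for i l
  proof -
    have "degree (D $$ (i, l)) \<le> (\<Sum>l<N. degree (D $$ (i, l)))"
      using that by (intro member_le_sum) auto
    also have "\<dots> \<le> (\<Sum>i<N. \<Sum>l<N. degree (D $$ (i, l)))"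
      using that by (intro member_le_sum[of i "{..<N}" "\<lambda>i. \<Sum>l<N. degree (D $$ (i, l))"]) auto
    finally show ?thesis unfolding Dk_def K'_def by (intro coeff_eq_0) simp
  qed
  have FK: "F (Suc K') = (\<lambda>i j. 0)"
  proof -
    have "F (Suc K') = mm N (\<lambda>i j. 0) (mpow N Af (Suc K'))"
      unfolding F_def Ek_def by (simp, rule mm_cong) (use Dk0 in auto)
    then show ?thesis by (simp add: mm_zero_left)
  qed
  have F0: "F 0 = (\<lambda>i j. 0)" unfolding F_def Ek_def by (simp add: mm_zero_left)
  have "psum N (Suc K') p Af = (\<lambda>i j. 0)"
  proof (rule ext, rule ext)
    fix i j
    have "psum N (Suc K') p Af i j = (\<Sum>k<Suc K'. F k i j - F (Suc k) i j)"
      unfolding psum_def using trm by simp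
    also have "\<dots> = F 0 i j - F (Suc K') i j" by (rule sum_lessThan_telescope')
    finally show "psum N (Suc K') p Af i j = 0" using F0 FK by simp
  qed
  moreover have "degree p < Suc K'" unfolding K'_def by simp
  ultimately show ?thesis using peval_psum unfolding p_def A_def by metis
qed

lemma gdet_cong: "(\<And>a b. a < k \<Longrightarrow> b < k \<Longrightarrow> M a b = M' a b) \<Longrightarrow> gdet k M = gdet k M'"
proof (induction k arbitrary: M M')
  case 0 then show ?case by simp
next
  case (Suc k)
  have "gdet k (minor M 0 j) = gdet k (minor M' 0 j)" for j
    by (rule Suc.IH) (use Suc.prems in \<open>auto simp: minor_def\<close>)
  then show ?case using Suc.prems by simp
qed

lemma charpoly_eval: fixes Af :: "nat \<Rightarrow> nat \<Rightarrow> 'a::comm_ring_1"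
  shows "poly (char_poly (mat N N (\<lambda>(i, j). Af i j))) x
     = det (mat N N (\<lambda>(i, j). (if i = j then x else 0) - Af i j))"
  unfolding char_poly_def
  by (rule poly_det_cong[of _ N]) (auto simp: char_poly_matrix_def)

lemma prod_list_upt: "prod_list (map f [0..<N]) = (\<Prod>i<N. f i)"
  by (induction N) (auto simp: mult.commute)



definition slot :: "nat \<Rightarrow> nat \<Rightarrow> nat \<Rightarrow> (nat \<Rightarrow> nat \<Rightarrow> 'a::comm_ring_1) \<Rightarrow> (nat list \<Rightarrow> 'a) \<Rightarrow> (nat list \<Rightarrow> 'a)" where
  "slot m N j B v = (\<lambda>ii. if ii \<in> idx m N then \<Sum>k<N. B (ii ! j) k * v (ii[j := k]) else 0)"

definition vz :: "nat \<Rightarrow> nat \<Rightarrow> (nat list \<Rightarrow> 'a::comm_ring_1) \<Rightarrow> bool" where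
  "vz m N v \<longleftrightarrow> (\<forall>ii. ii \<notin> idx m N \<longrightarrow> v ii = 0)"

lemma idx_upd: "ii \<in> idx m N \<Longrightarrow> k < N \<Longrightarrow> ii[j := k] \<in> idx m N"
  unfolding idx_def by (auto dest: set_update_subset_insert[THEN subsetD])

lemma idx_nth: "ii \<in> idx m N \<Longrightarrow> j < m \<Longrightarrow> ii ! j < N"
  unfolding idx_def by auto

lemma idx_len: "ii \<in> idx m N \<Longrightarrow> length ii = m"
  unfolding idx_def by auto

lemma slot_vz: "vz m N (slot m N j B v)" unfolding vz_def slot_def by auto

lemma slot_comm: assumes "j \<noteq> l" "j < m" "l < m"
  shows "slot m N j B (slot m N l C v) = slot m N l C (slot m N j B v)"
proof
  fix ii
  show "slot m N j B (slot m N l C v) ii = slot m N l C (slot m N j B v) ii"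
  proof (cases "ii \<in> idx m N")
    case True
    have "slot m N j B (slot m N l C v) ii = (\<Sum>k<N. \<Sum>k'<N. B (ii ! j) k * C (ii ! l) k' * v (ii[j := k, l := k']))"
      using True assms unfolding slot_def by (auto simp: idx_upd sum_distrib_left mult.assoc intro!: sum.cong)
    also have "\<dots> = (\<Sum>k'<N. \<Sum>k<N. B (ii ! j) k * C (ii ! l) k' * v (ii[j := k, l := k']))"
      by (rule sum.swap)
    also have "\<dots> = slot m N l C (slot m N j B v) ii"
      using True assms unfolding slot_def
      by (auto simp: idx_upd sum_distrib_left mult.assoc mult.left_commute list_update_swap intro!: sum.cong)
    finally show ?thesis .
  qed (simp add: slot_def)
qed

lemma slot_mm: assumes "j < m"
  shows "slot m N j (mm N B C) v = slot m N j B (slot m N j C v)"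
proof
  fix ii
  show "slot m N j (mm N B C) v ii = slot m N j B (slot m N j C v) ii"
  proof (cases "ii \<in> idx m N")
    case True
    have jN: "ii ! j < N" using idx_nth[OF True assms] .
    have "slot m N j (mm N B C) v ii = (\<Sum>k'<N. \<Sum>k<N. B (ii ! j) k * C k k' * v (ii[j := k']))"
      using True jN unfolding slot_def mm_def by (auto simp: sum_distrib_right intro!: sum.cong)
    also have "\<dots> = (\<Sum>k<N. \<Sum>k'<N. B (ii ! j) k * C k k' * v (ii[j := k']))"
      by (rule sum.swap)
    also have "\<dots> = slot m N j B (slot m N j C v) ii"
      using True assms unfolding slot_def
      by (auto simp: idx_upd sum_distrib_left mult.assoc idx_len intro!: sum.cong)
    finally show ?thesis .
  qed (simp add: slot_def)
qed

lemma slot_mid: assumes "vz m N v" "j < m" shows "slot m N j (mid N) v = v"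
proof
  fix ii
  show "slot m N j (mid N) v ii = v ii"
  proof (cases "ii \<in> idx m N")
    case True
    have jN: "ii ! j < N" using idx_nth[OF True assms(2)] .
    have "slot m N j (mid N) v ii = (\<Sum>k<N. (if ii ! j = k then 1 else 0) * v (ii[j := k]))"
      using True unfolding slot_def mid_def by (auto intro!: sum.cong)
    also have "\<dots> = (\<Sum>k<N. if k = ii ! j then v (ii[j := k]) else 0)"
      by (rule sum.cong) auto
    also have "\<dots> = v ii" using jN by (simp add: sum.delta)
    finally show ?thesis .
  qed (use assms in \<open>simp add: slot_def vz_def\<close>)
qed

lemma slot_zero: "slot m N j (\<lambda>a b. 0) v = (\<lambda>ii. 0)"
  unfolding slot_def by auto

lemma slot_lin_mat: "slot m N j (\<lambda>a b. X a b - c * Y a b) v = (\<lambda>ii. slot m N j X v ii - c * slot m N j Y v ii)"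
  unfolding slot_def by (auto simp: fun_eq_iff left_diff_distrib sum_subtractf sum_distrib_left mult.assoc)

lemma slot_lin_vec: "slot m N j B (\<lambda>ii. v ii - c * w ii) = (\<lambda>ii. slot m N j B v ii - c * slot m N j B w ii)"
  unfolding slot_def by (auto simp: fun_eq_iff right_diff_distrib sum_subtractf sum_distrib_left mult.left_commute)

lemma slot_scal: "slot m N j B (\<lambda>ii. c * v ii) = (\<lambda>ii. c * slot m N j B v ii)"
  unfolding slot_def by (auto simp: fun_eq_iff sum_distrib_left mult.left_commute)

fun comp :: "nat \<Rightarrow> nat \<Rightarrow> (nat \<Rightarrow> nat \<Rightarrow> nat \<Rightarrow> 'a::comm_ring_1) \<Rightarrow> nat \<Rightarrow> (nat list \<Rightarrow> 'a) \<Rightarrow> (nat list \<Rightarrow> 'a)" where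
  "comp m N As 0 v = v"
| "comp m N As (Suc r) v = comp m N As r (slot m N r (As r) v)"

lemma comp_vz: "vz m N v \<Longrightarrow> vz m N (comp m N As r v)"
  by (induction r arbitrary: v) (auto simp: slot_vz)

lemma comp_lin: "comp m N As r (\<lambda>ii. v ii - c * w ii) = (\<lambda>ii. comp m N As r v ii - c * comp m N As r w ii)"
  by (induction r arbitrary: v w) (auto simp: slot_lin_vec)

lemma comp_scal: "comp m N As r (\<lambda>ii. c * v ii) = (\<lambda>ii. c * comp m N As r v ii)"
  by (induction r arbitrary: v) (auto simp: slot_scal)

lemma comp_slot: assumes "j < m" "r \<le> m"
  shows "comp m N As r (slot m N j (As j) v) = slot m N j (As j) (comp m N As r v)"
  using assms(2)
proof (induction r arbitrary: v)
  case 0 then show ?case by simp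
next
  case (Suc r)
  have "slot m N r (As r) (slot m N j (As j) v) = slot m N j (As j) (slot m N r (As r) v)"
    using assms(1) Suc.prems by (cases "r = j") (auto intro: slot_comm)
  then show ?case using Suc by simp
qed

lemma comp_eigen: assumes "\<forall>l<r. slot m N l (As l) v = (\<lambda>ii. mu l * v ii)"
  shows "comp m N As r v = (\<lambda>ii. (\<Prod>l<r. mu l) * v ii)"
  using assms
proof (induction r arbitrary: v)
  case 0 then show ?case by simp
next
  case (Suc r)
  have "comp m N As (Suc r) v = comp m N As r (\<lambda>ii. mu r * v ii)" using Suc.prems by simp
  also have "\<dots> = (\<lambda>ii. mu r * comp m N As r v ii)" by (rule comp_scal)
  also have "\<dots> = (\<lambda>ii. mu r * ((\<Prod>l<r. mu l) * v ii))" using Suc by simp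
  finally show ?case by (simp add: mult_ac)
qed

definition Tset :: "nat \<Rightarrow> nat \<Rightarrow> nat \<Rightarrow> nat list \<Rightarrow> nat list set" where
  "Tset m N r ii = {js \<in> idx m N. \<forall>l. r \<le> l \<and> l < m \<longrightarrow> js ! l = ii ! l}"

lemma Tset_bij: assumes "ii \<in> idx m N" "r < m"
  shows "bij_betw (\<lambda>(js, k). js[r := k]) (Tset m N r ii \<times> {..<N}) (Tset m N (Suc r) ii)"
proof -
  have lis: "length ii = m" using idx_len[OF assms(1)] .
  show ?thesis
  proof (rule bij_betw_byWitness[of _ "\<lambda>js'. (js'[r := ii ! r], js' ! r)"])
    show "\<forall>a\<in>Tset m N r ii \<times> {..<N}. (\<lambda>js'. (js'[r := ii ! r], js' ! r)) ((\<lambda>(js, k). js[r := k]) a) = a"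
    proof (intro ballI)
      fix a assume "a \<in> Tset m N r ii \<times> {..<N}"
      then obtain js k where a: "a = (js, k)" "js \<in> Tset m N r ii" by auto
      have l: "length js = m" using a(2) idx_len unfolding Tset_def by auto
      have "js ! r = ii ! r" using a(2) assms(2) unfolding Tset_def by auto
      then show "(\<lambda>js'. (js'[r := ii ! r], js' ! r)) ((\<lambda>(js, k). js[r := k]) a) = a"
        using l assms(2) a(1) by (simp add: list_update_same_conv)
    qed
    show "\<forall>a'\<in>Tset m N (Suc r) ii. (\<lambda>(js, k). js[r := k]) ((\<lambda>js'. (js'[r := ii ! r], js' ! r)) a') = a'"
      by auto
    show "(\<lambda>(js, k). js[r := k]) ` (Tset m N r ii \<times> {..<N}) \<subseteq> Tset m N (Suc r) ii"
      unfolding Tset_def by (auto simp: idx_upd idx_len nth_list_update)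
    show "(\<lambda>js'. (js'[r := ii ! r], js' ! r)) ` Tset m N (Suc r) ii \<subseteq> Tset m N r ii \<times> {..<N}"
    proof safe
      fix js' assume js': "js' \<in> Tset m N (Suc r) ii"
      have "ii ! r < N" using idx_nth[OF assms] .
      then show "js'[r := ii ! r] \<in> Tset m N r ii" using js' unfolding Tset_def
        by (auto simp: idx_upd idx_len nth_list_update)
      show "js' ! r < N" using js' assms(2) idx_nth unfolding Tset_def by auto
    qed
  qed
qed

lemma Tset_0: assumes "ii \<in> idx m N" shows "Tset m N 0 ii = {ii}"
  using assms unfolding Tset_def by (auto simp: idx_len intro: nth_equalityI)

lemma Tset_m: "Tset m N m ii = idx m N" unfolding Tset_def by auto

lemma comp_formula: assumes "vz m N v" "r \<le> m"
  shows "comp m N As r v ii = (if ii \<in> idx m N then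
     \<Sum>js\<in>Tset m N r ii. (\<Prod>l<r. As l (ii ! l) (js ! l)) * v js else 0)"
  using assms
proof (induction r arbitrary: v ii)
  case 0 then show ?case by (auto simp: Tset_0 vz_def)
next
  case (Suc r)
  have vz': "vz m N (slot m N r (As r) v)" by (rule slot_vz)
  have "comp m N As (Suc r) v ii = comp m N As r (slot m N r (As r) v) ii" by simp
  also have "\<dots> = (if ii \<in> idx m N then
     \<Sum>js\<in>Tset m N r ii. (\<Prod>l<r. As l (ii ! l) (js ! l)) * slot m N r (As r) v js else 0)"
    using Suc.IH[OF vz'] Suc.prems by simp
  also have "\<dots> = (if ii \<in> idx m N then
     \<Sum>js\<in>Tset m N (Suc r) ii. (\<Prod>l<Suc r. As l (ii ! l) (js ! l)) * v js else 0)"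
  proof (cases "ii \<in> idx m N")
    case True
    have rm: "r < m" using Suc.prems by simp
    have "(\<Sum>js\<in>Tset m N r ii. (\<Prod>l<r. As l (ii ! l) (js ! l)) * slot m N r (As r) v js)
       = (\<Sum>js\<in>Tset m N r ii. \<Sum>k<N. (\<Prod>l<Suc r. As l (ii ! l) (js[r := k] ! l)) * v (js[r := k]))"
    proof (rule sum.cong[OF refl])
      fix js assume js: "js \<in> Tset m N r ii"
      have jsI: "js \<in> idx m N" and jr: "js ! r = ii ! r" and lj: "length js = m"
        using js rm unfolding Tset_def by (auto simp: idx_len)
      have pr: "(\<Prod>l<Suc r. As l (ii ! l) (js[r := k] ! l)) = (\<Prod>l<r. As l (ii ! l) (js ! l)) * As r (ii ! r) k" for k
        using lj rm by (auto simp: nth_list_update intro!: prod.cong)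
      show "(\<Prod>l<r. As l (ii ! l) (js ! l)) * slot m N r (As r) v js
         = (\<Sum>k<N. (\<Prod>l<Suc r. As l (ii ! l) (js[r := k] ! l)) * v (js[r := k]))"
        unfolding pr slot_def using jsI jr by (simp add: sum_distrib_left mult.assoc)
    qed
    also have "\<dots> = (\<Sum>(js, k)\<in>Tset m N r ii \<times> {..<N}. (\<Prod>l<Suc r. As l (ii ! l) (js[r := k] ! l)) * v (js[r := k]))"
      by (rule sum.cartesian_product)
    also have "\<dots> = (\<Sum>js\<in>Tset m N (Suc r) ii. (\<Prod>l<Suc r. As l (ii ! l) (js ! l)) * v js)"
      using sum.reindex_bij_betw[OF Tset_bij[OF True rm], of "\<lambda>js. (\<Prod>l<Suc r. As l (ii ! l) (js ! l)) * v js"]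
      by (simp add: case_prod_unfold)
    finally show ?thesis using True by simp
  qed simp
  finally show ?case .
qed

lemma comp_m: assumes "vz m N v"
  shows "comp m N As m v ii = (if ii \<in> idx m N then
     \<Sum>js\<in>idx m N. (\<Prod>l<m. As l (ii ! l) (js ! l)) * v js else 0)"
  using comp_formula[OF assms le_refl] by (simp add: Tset_m)



definition qs :: "(nat \<Rightarrow> 'a::comm_ring_1) \<Rightarrow> nat \<Rightarrow> 'a poly" where
  "qs mu s = (\<Prod>i<s. [:- mu i, 1:])"

lemma qs_Suc: "qs mu (Suc s) = [:- mu s, 1:] * qs mu s"
  unfolding qs_def by (simp add: mult.commute)

lemma peval_one: "peval N 1 B = mid N"
proof -
  have "peval N (pCons 1 0) B = mid N" by (simp add: peval_pCons mm_zero_right)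
  then show ?thesis by (simp add: one_pCons)
qed

locale chainctx =
  fixes m N :: nat and As :: "nat \<Rightarrow> nat \<Rightarrow> nat \<Rightarrow> 'a::idom" and mus :: "nat \<Rightarrow> nat \<Rightarrow> 'a"
    and a b :: 'a
  assumes CHl: "\<forall>l<m. peval N (qs (mus l) N) (As l) = (\<lambda>i j. 0)"
begin

definition Pq :: "nat \<Rightarrow> (nat \<Rightarrow> nat) \<Rightarrow> (nat list \<Rightarrow> 'a) \<Rightarrow> bool" where
  "Pq r f u \<longleftrightarrow> vz m N u \<and> (\<lambda>ii. b * comp m N As m u ii) = (\<lambda>ii. a * u ii) \<and>
     (\<forall>l<r. slot m N l (As l) u = (\<lambda>ii. mus l (f l) * u ii))"

lemma Pq_step: assumes "r < m" "Pq r f u"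
  shows "Pq r f (\<lambda>ii. slot m N r (As r) u ii - c * u ii)"
proof -
  let ?X = "slot m N r (As r)"
  have vzu: "vz m N u" and W: "(\<lambda>ii. b * comp m N As m u ii) = (\<lambda>ii. a * u ii)"
    and E: "\<forall>l<r. slot m N l (As l) u = (\<lambda>ii. mus l (f l) * u ii)" using assms(2) unfolding Pq_def by auto
  have vz1: "vz m N (\<lambda>ii. ?X u ii - c * u ii)" using vzu slot_vz[of m N r "As r" u] unfolding vz_def by auto
  have "(\<lambda>ii. b * comp m N As m (\<lambda>ii. ?X u ii - c * u ii) ii)
      = (\<lambda>ii. b * (comp m N As m (?X u) ii - c * comp m N As m u ii))"
    by (simp add: comp_lin)
  also have "\<dots> = (\<lambda>ii. b * (?X (comp m N As m u) ii - c * comp m N As m u ii))"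
    using comp_slot[OF assms(1) le_refl, of N As u] by simp
  also have "\<dots> = (\<lambda>ii. ?X (\<lambda>ii. b * comp m N As m u ii) ii - c * (b * comp m N As m u ii))"
    by (simp add: slot_scal algebra_simps)
  also have "\<dots> = (\<lambda>ii. ?X (\<lambda>ii. a * u ii) ii - c * (a * u ii))"
    using W by (simp add: fun_eq_iff)
  also have "\<dots> = (\<lambda>ii. a * (?X u ii - c * u ii))"
    by (simp add: slot_scal algebra_simps)
  finally have W1: "(\<lambda>ii. b * comp m N As m (\<lambda>ii. ?X u ii - c * u ii) ii) = (\<lambda>ii. a * (?X u ii - c * u ii))" .
  have E1: "slot m N l (As l) (\<lambda>ii. ?X u ii - c * u ii) = (\<lambda>ii. mus l (f l) * (?X u ii - c * u ii))"
    if "l < r" for l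
  proof -
    have "slot m N l (As l) (\<lambda>ii. ?X u ii - c * u ii) = (\<lambda>ii. slot m N l (As l) (?X u) ii - c * slot m N l (As l) u ii)"
      by (rule slot_lin_vec)
    also have "\<dots> = (\<lambda>ii. ?X (slot m N l (As l) u) ii - c * slot m N l (As l) u ii)"
      using slot_comm[of l r m N "As l" "As r" u] that assms(1) by simp
    also have "\<dots> = (\<lambda>ii. ?X (\<lambda>ii. mus l (f l) * u ii) ii - c * (mus l (f l) * u ii))"
      using E that by simp
    also have "\<dots> = (\<lambda>ii. mus l (f l) * (?X u ii - c * u ii))"
      by (simp only: slot_scal) (simp add: algebra_simps)
    finally show ?thesis .
  qed
  show ?thesis unfolding Pq_def using vz1 W1 E1 by auto
qed

lemma Pq_next: assumes "r < m" "Pq r f v" "v \<noteq> (\<lambda>ii. 0)"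
  shows "\<exists>v' s. s < N \<and> Pq (Suc r) (f(r := s)) v' \<and> v' \<noteq> (\<lambda>ii. 0)"
proof -
  let ?X = "slot m N r (As r)"
  define ch where "ch s = slot m N r (peval N (qs (mus r) s) (As r)) v" for s
  have vzv: "vz m N v" using assms(2) unfolding Pq_def by auto
  have ch0: "ch 0 = v" unfolding ch_def qs_def using slot_mid[OF vzv assms(1)] by (simp add: peval_one)
  have chN: "ch N = (\<lambda>ii. 0)" unfolding ch_def using CHl assms(1) by (simp add: slot_zero)
  have chS: "ch (Suc s) = (\<lambda>ii. ?X (ch s) ii - mus r s * ch s ii)" for s
    unfolding ch_def qs_Suc peval_linear slot_lin_mat slot_mm[OF assms(1)] ..
  have Pch: "Pq r f (ch s)" for s
  proof (induction s)
    case 0 then show ?case using ch0 assms(2) by simp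
  next
    case (Suc s) then show ?case unfolding chS by (rule Pq_step[OF assms(1)])
  qed
  have "\<exists>s<N. ch s \<noteq> (\<lambda>ii. 0) \<and> ch (Suc s) = (\<lambda>ii. 0)"
  proof (rule ccontr)
    assume "\<not> ?thesis"
    then have H: "\<forall>s<N. ch s \<noteq> (\<lambda>ii. 0) \<longrightarrow> ch (Suc s) \<noteq> (\<lambda>ii. 0)" by blast
    have "s \<le> N \<Longrightarrow> ch s \<noteq> (\<lambda>ii. 0)" for s
      by (induction s) (use ch0 assms(3) H in auto)
    then show False using chN by blast
  qed
  then obtain s where s: "s < N" "ch s \<noteq> (\<lambda>ii. 0)" "ch (Suc s) = (\<lambda>ii. 0)" by blast
  have eig: "?X (ch s) = (\<lambda>ii. mus r s * ch s ii)"
  proof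
    fix ii show "?X (ch s) ii = mus r s * ch s ii" using fun_cong[OF s(3), of ii] unfolding chS by simp
  qed
  have "Pq (Suc r) (f(r := s)) (ch s)"
    using Pch[of s] eig unfolding Pq_def by (auto simp: less_Suc_eq)
  then show ?thesis using s by blast
qed

lemma chain_main: assumes "vz m N w" "w \<noteq> (\<lambda>ii. 0)" "(\<lambda>ii. b * comp m N As m w ii) = (\<lambda>ii. a * w ii)"
  shows "\<exists>f. (\<forall>l<m. f l < N) \<and> a = b * (\<Prod>l<m. mus l (f l))"
proof -
  have "r \<le> m \<Longrightarrow> \<exists>v f. Pq r f v \<and> v \<noteq> (\<lambda>ii. 0) \<and> (\<forall>l<r. f l < N)" for r
  proof (induction r)
    case 0 then show ?case using assms unfolding Pq_def by auto
  next
    case (Suc r)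
    then obtain v f where v: "Pq r f v" "v \<noteq> (\<lambda>ii. 0)" "\<forall>l<r. f l < N" by auto
    obtain v' s where vs: "s < N" "Pq (Suc r) (f(r := s)) v'" "v' \<noteq> (\<lambda>ii. 0)"
      using Pq_next[OF _ v(1,2)] Suc.prems by auto
    have "\<forall>l<Suc r. (f(r := s)) l < N" using v(3) vs(1) by (auto simp: less_Suc_eq)
    then show ?case using vs(2,3) by blast
  qed
  then obtain v f where v: "Pq m f v" "v \<noteq> (\<lambda>ii. 0)" "\<forall>l<m. f l < N" by blast
  have W: "(\<lambda>ii. b * comp m N As m v ii) = (\<lambda>ii. a * v ii)"
    and E: "\<forall>l<m. slot m N l (As l) v = (\<lambda>ii. mus l (f l) * v ii)" using v(1) unfolding Pq_def by auto
  have C: "comp m N As m v = (\<lambda>ii. (\<Prod>l<m. mus l (f l)) * v ii)" by (rule comp_eigen[OF E])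
  obtain ii where ii: "v ii \<noteq> 0" using v(2) by auto
  have "b * ((\<Prod>l<m. mus l (f l)) * v ii) = a * v ii" using fun_cong[OF W, of ii] C by simp
  then have "(b * (\<Prod>l<m. mus l (f l))) * v ii = a * v ii" by (simp add: mult.assoc)
  then have "b * (\<Prod>l<m. mus l (f l)) = a" using ii by simp
  then show ?thesis using v(3) by auto
qed

end



definition cst :: "real \<Rightarrow> ser" where "cst r = (\<lambda>q. if q = 0 then r else 0)"

lemma cst_puiseux: "cst r \<in> puiseux"
  unfolding puiseux_def cst_def by (intro CollectI exI[of _ 1] conjI exI[of _ 0]) (auto intro: exI[of _ 0])

lemma inj_cst: "inj (\<lambda>r. AbsG (sig l (cst r)))"
proof (rule injI)
  fix r s assume "AbsG (sig l (cst r)) = AbsG (sig l (cst s))"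
  then have "RepG (AbsG (sig l (cst r))) 0 = RepG (AbsG (sig l (cst s))) 0" by simp
  then show "r = s" using good_sig[OF cst_puiseux]
    by (simp add: RepG_AbsG sig_def cst_def onj_def)
qed

lemma charpoly_split:
  assumes Apu: "\<forall>i<N. \<forall>j<N. A i j \<in> puiseux" and lpu: "\<forall>i<N. lam i \<in> puiseux"
    and hyp: "\<forall>x\<in>puiseux. char_poly_at N A x = foldr ser_mult (map (\<lambda>i. ser_diff x (lam i)) [0..<N]) ser_one"
  shows "char_poly (mat N N (\<lambda>(i, j). AbsG (sig l (A i j)))) = qs (\<lambda>i. AbsG (sig l (lam i))) N"
proof -
  let ?As = "\<lambda>i j. AbsG (sig l (A i j))"
  let ?mu = "\<lambda>i. AbsG (sig l (lam i))"
  let ?P = "char_poly (mat N N (\<lambda>(i, j). ?As i j)) - qs ?mu N"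
  have root: "poly ?P (AbsG (sig l y)) = 0" if y: "y \<in> puiseux" for y
  proof -
    define Y where "Y = AbsG (sig l y)"
    have gy: "good (sig l y)" using good_sig[OF y] .
    define Mx where "Mx i j = ser_diff (if i = j then y else ser_zero) (A i j)" for i j
    have gM: "\<forall>a<N. \<forall>b<N. good (sig l (Mx a b))"
      unfolding Mx_def sig_diff using Apu gy
      by (auto simp: sig_zero good_zero intro!: good_minus good_sig)
    have h1: "poly (char_poly (mat N N (\<lambda>(i, j). ?As i j))) Y = gdet N (\<lambda>i j. (if i = j then Y else 0) - ?As i j)"
      unfolding charpoly_eval gdet_det ..
    have h2: "gdet N (\<lambda>i j. (if i = j then Y else 0) - ?As i j) = gdet N (\<lambda>i j. AbsG (sig l (Mx i j)))"
    proof (rule gdet_cong)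
      fix i j assume ij: "i < N" "j < N"
      have "RepG ((if i = j then Y else 0) - ?As i j) = RepG (AbsG (sig l (Mx i j)))"
        using ij gy good_sig Apu gM unfolding Y_def Mx_def sig_diff
        by (auto simp: RepG_AbsG sig_zero)
      then show "(if i = j then Y else 0) - ?As i j = AbsG (sig l (Mx i j))" using RepG_inject by blast
    qed
    have h3: "RepG (gdet N (\<lambda>i j. AbsG (sig l (Mx i j)))) = sig l (char_poly_at N A y)"
      unfolding char_poly_at_def using sig_det[OF gM] unfolding Mx_def by simp
    have gl: "\<forall>x\<in>set (map (\<lambda>i. ser_diff y (lam i)) [0..<N]). good (sig l x)"
      using lpu gy by (auto simp: sig_diff intro!: good_minus good_sig)
    have h4: "sig l (char_poly_at N A y) = RepG (prod_list (map (\<lambda>x. AbsG (sig l x)) (map (\<lambda>i. ser_diff y (lam i)) [0..<N])))"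
      using hyp y RepG_prod_list[OF gl] by simp
    have fac: "AbsG (sig l (ser_diff y (lam i))) = Y - ?mu i" if "i < N" for i
    proof -
      have "RepG (AbsG (sig l (ser_diff y (lam i)))) = RepG (Y - ?mu i)"
        using that gy lpu good_sig unfolding Y_def sig_diff by (auto simp: RepG_AbsG good_minus)
      then show ?thesis using RepG_inject by blast
    qed
    have h5: "prod_list (map (\<lambda>x. AbsG (sig l x)) (map (\<lambda>i. ser_diff y (lam i)) [0..<N])) = poly (qs ?mu N) Y"
      unfolding map_map comp_def prod_list_upt qs_def poly_prod
      by (rule prod.cong) (auto simp: fac)
    have "RepG (poly (char_poly (mat N N (\<lambda>(i, j). ?As i j))) Y) = RepG (poly (qs ?mu N) Y)"
      using h1 h2 h3 h4 h5 by simp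
    then have "poly (char_poly (mat N N (\<lambda>(i, j). ?As i j))) Y = poly (qs ?mu N) Y" using RepG_inject by blast
    then show ?thesis unfolding Y_def by simp
  qed
  have sub: "range (\<lambda>r. AbsG (sig l (cst r))) \<subseteq> {x. poly ?P x = 0}"
    using root cst_puiseux by auto
  have "infinite (range (\<lambda>r. AbsG (sig l (cst r))))"
    using inj_cst[of l] by (simp add: finite_image_iff infinite_UNIV_char_0)
  then have "infinite {x. poly ?P x = 0}" using sub finite_subset by blast
  then have "?P = 0" using poly_roots_finite by blast
  then show ?thesis by simp
qed

lemma tens_cong: "(\<And>j. j < m \<Longrightarrow> fs j = gs j) \<Longrightarrow> tens m fs = tens m gs"
  unfolding tens_def by (auto simp: fun_eq_iff intro!: prod.cong)

theorem mainTheorem11: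
  fixes n m :: nat and A :: "nat \<Rightarrow> nat \<Rightarrow> ser" and lam :: "nat \<Rightarrow> ser"
  assumes "1 \<le> n"
    and "\<forall>i<n-1. \<forall>j<n-1. A i j \<in> laurent_poly"
    and "\<forall>i<n-1. lam i \<in> puiseux"
    and "\<forall>x\<in>puiseux. char_poly_at (n-1) A x
           = foldr ser_mult (map (\<lambda>i. ser_diff x (lam i)) [0..<n-1]) ser_one"
    and "1 \<le> m"
  shows "\<forall>a\<in>Em m. \<forall>b\<in>Em m. b \<noteq> (\<lambda>e. 0) \<longrightarrow>
           frac_eigenvalue m (n-1) (tensor_matrix m A) a b \<longrightarrow>
           (\<exists>is\<in>idx m (n-1). a = mser_mult b (tens m (\<lambda>j. lam (is ! j))))"
proof (intro ballI impI)
  fix a b assume aE: "a \<in> Em m" and bE: "b \<in> Em m" and bnz: "b \<noteq> (\<lambda>e. 0)"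
    and fe: "frac_eigenvalue m (n-1) (tensor_matrix m A) a b"
  define N where "N = n - 1"
  have Apu: "\<forall>i<N. \<forall>j<N. A i j \<in> puiseux" using assms(2) laurent_puiseux unfolding N_def by blast
  have lpu: "\<forall>i<N. lam i \<in> puiseux" using assms(3) unfolding N_def by blast
  have hyp: "\<forall>x\<in>puiseux. char_poly_at N A x = foldr ser_mult (map (\<lambda>i. ser_diff x (lam i)) [0..<N]) ser_one"
    using assms(4) unfolding N_def by blast
  obtain w where w1: "\<forall>js\<in>idx m N. w js \<in> Em m" and w2: "\<exists>js\<in>idx m N. w js \<noteq> (\<lambda>e. 0)"
    and w3: "\<forall>ii\<in>idx m N. mser_mult b (\<lambda>e. \<Sum>js\<in>idx m N. mser_mult (tensor_matrix m A ii js) (w js) e)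
                          = mser_mult a (w ii)"
    using fe unfolding frac_eigenvalue_def N_def by blast
  define As where "As l i k = AbsG (sig l (A i k))" for l i k
  define mus where "mus l i = AbsG (sig l (lam i))" for l i
  have CHl: "\<forall>l<m. peval N (qs (mus l) N) (As l) = (\<lambda>i j. 0)"
  proof (intro allI impI)
    fix l assume "l < m"
    have "char_poly (mat N N (\<lambda>(i, j). As l i j)) = qs (mus l) N"
      unfolding As_def mus_def by (rule charpoly_split[OF Apu lpu hyp])
    then show "peval N (qs (mus l) N) (As l) = (\<lambda>i j. 0)" using CH[of N "As l"] by simp
  qed
  interpret chainctx m N As mus "AbsG a" "AbsG b" by unfold_locales (rule CHl)
  have ga: "good a" using Em_good[OF aE] .
  have gb: "good b" using Em_good[OF bE] .
  have gw: "good (w js)" if "js \<in> idx m N" for js using Em_good w1 that by blast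
  define wG where "wG ii = (if ii \<in> idx m N then AbsG (w ii) else 0)" for ii
  have vzw: "vz m N wG" unfolding vz_def wG_def by auto
  have nzw: "wG \<noteq> (\<lambda>ii. 0)"
  proof
    assume z: "wG = (\<lambda>ii. 0)"
    obtain js where js: "js \<in> idx m N" "w js \<noteq> (\<lambda>e. 0)" using w2 by blast
    have "AbsG (w js) = 0" using fun_cong[OF z, of js] js(1) unfolding wG_def by simp
    then have "RepG (AbsG (w js)) = RepG 0" by simp
    then show False using js gw[OF js(1)] by (simp add: RepG_AbsG)
  qed
  have Tm: "(\<Prod>l<m. As l (ii ! l) (js ! l)) = AbsG (tensor_matrix m A ii js)"
    if "ii \<in> idx m N" "js \<in> idx m N" for ii js
  proof -
    have pu: "\<forall>j<m. A (ii ! j) (js ! j) \<in> puiseux" using that Apu idx_nth by blast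
    have "RepG (\<Prod>l<m. As l (ii ! l) (js ! l)) = tensor_matrix m A ii js"
      unfolding tensor_matrix_def As_def using tens_prod[OF pu] by simp
    then show ?thesis by (metis RepG_inverse)
  qed
  have eqv: "(\<lambda>ii. AbsG b * comp m N As m wG ii) = (\<lambda>ii. AbsG a * wG ii)"
  proof
    fix ii
    show "AbsG b * comp m N As m wG ii = AbsG a * wG ii"
    proof (cases "ii \<in> idx m N")
      case True
      have "comp m N As m wG ii = (\<Sum>js\<in>idx m N. AbsG (tensor_matrix m A ii js) * AbsG (w js))"
        unfolding comp_m[OF vzw] using True Tm by (auto simp: wG_def intro!: sum.cong)
      moreover have "good (tensor_matrix m A ii js)" if "js \<in> idx m N" for js
        unfolding tensor_matrix_def using True that Apu idx_nth by (intro good_tens) blast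
      ultimately have "RepG (AbsG b * comp m N As m wG ii)
          = mser_mult b (\<lambda>e. \<Sum>js\<in>idx m N. mser_mult (tensor_matrix m A ii js) (w js) e)"
        using gb gw by (simp add: RepG_sum RepG_AbsG)
      also have "\<dots> = mser_mult a (w ii)" using w3 True by blast
      also have "\<dots> = RepG (AbsG a * wG ii)" using True ga gw[OF True] by (simp add: wG_def RepG_AbsG)
      finally show ?thesis using RepG_inject by blast
    next
      case False
      then show ?thesis using comp_vz[OF vzw, of As m] unfolding vz_def wG_def by simp
    qed
  qed
  obtain f where f: "\<forall>l<m. f l < N" "AbsG a = AbsG b * (\<Prod>l<m. mus l (f l))"
    using chain_main[OF vzw nzw eqv] by blast
  define is0 where "is0 = map f [0..<m]"
  have is0: "is0 \<in> idx m N" unfolding is0_def idx_def using f(1) by auto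
  have pu: "\<forall>j<m. lam (f j) \<in> puiseux" using f(1) lpu by blast
  have "a = RepG (AbsG a)" using ga by (simp add: RepG_AbsG)
  also have "\<dots> = mser_mult b (RepG (\<Prod>l<m. mus l (f l)))" using f(2) gb by (simp add: RepG_AbsG)
  also have "RepG (\<Prod>l<m. mus l (f l)) = tens m (\<lambda>j. lam (f j))"
    unfolding mus_def using tens_prod[OF pu] by simp
  also have "tens m (\<lambda>j. lam (f j)) = tens m (\<lambda>j. lam (is0 ! j))"
    by (rule tens_cong) (simp add: is0_def)
  finally show "\<exists>is\<in>idx m (n-1). a = mser_mult b (tens m (\<lambda>j. lam (is ! j)))"
    using is0 unfolding N_def by blast
qed


end
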